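(* Let $(V,w,\mu)$ be a simple weighted graph, let $d$ be a metric on $V$ inducing the discrete topology, and fix $\bar x\in V$. Assume all closed balls in $(V,d)$ are finite. If there exists an upper rate function $R(t)$ for the associated minimal Markov chain $(X_t)_{t\ge0}$ with respect to $d$, then $(X_t)_{t\ge0}$ is conservative.
   Context: A simple weighted graph $(V,w,\mu)$ consists of a countably infinite set $V$, a symmetric function $w:V\times V\to[0,\infty)$ and a function $\mu:V\to(0,\infty)$. The graph with edges $\{x\sim y:w(x,y)>0\}$ is assumed to be locally finite, connected, and without loops or multiple edges. The minimal Markov chain is the minimal continuous-time chain with $Q$-matrix $q_{xy}=w(x,y)/\mu(x)$ for $x\ne y$ and $q_{xx}=-\frac1{\mu(x)}\sum_y w(x,y)$. Equivalently, it is the Hunt process of the minimal regular Dirichlet form. Its lifetime $\zeta$ is the explosion time, after which the process sits at a cemetery point $\infty$. It is conservative if $\mathbb P_x(\zeta<\infty)=0$ for all $x\in V$. A nonnegative increasing function $R(t)$ is an upper rate function with respect to $d$ if there exists a random time $T<\zeta$ such that $\mathbb P_{\bar x}\big(d(X_t,\bar x)\le R(t)\text{ for all }T\le t<\zeta\big)=1$. *)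

theory Defs
  imports "HOL-Probability.Probability"
begin

definition simple_weighted_graph :: "'a set \<Rightarrow> ('a \<Rightarrow> 'a \<Rightarrow> real) \<Rightarrow> ('a \<Rightarrow> real) \<Rightarrow> bool" where
  "simple_weighted_graph V w \<mu> \<longleftrightarrow>
     countable V \<and> infinite V \<and>
     (\<forall>x y. w x y = w y x) \<and>
     (\<forall>x y. 0 \<le> w x y) \<and>
     (\<forall>x y. 0 < w x y \<longrightarrow> x \<in> V \<and> y \<in> V) \<and>
     (\<forall>x\<in>V. 0 < \<mu> x) \<and>
     (\<forall>x. w x x = 0) \<and>
     (\<forall>x\<in>V. finite {y. 0 < w x y}) \<and>
     (\<forall>x\<in>V. \<forall>y\<in>V. (x, y) \<in> {(a, b). 0 < w a b}\<^sup>*)"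

text \<open>Weighted degree and the total jump rate -q_xx = deg x / mu x.\<close>

definition wdeg :: "('a \<Rightarrow> 'a \<Rightarrow> real) \<Rightarrow> 'a \<Rightarrow> real" where
  "wdeg w x = (\<Sum>y\<in>{y. 0 < w x y}. w x y)"

definition jump_rate :: "('a \<Rightarrow> 'a \<Rightarrow> real) \<Rightarrow> ('a \<Rightarrow> real) \<Rightarrow> 'a \<Rightarrow> real" where
  "jump_rate w \<mu> x = wdeg w x / \<mu> x"

text \<open>Jump-chain transition probabilities q_xy / (-q_xx) = w x y / deg x.\<close>

definition jump_prob :: "('a \<Rightarrow> 'a \<Rightarrow> real) \<Rightarrow> 'a \<Rightarrow> 'a \<Rightarrow> real" where
  "jump_prob w x y = w x y / wdeg w x"

definition discrete_metric_on :: "'a set \<Rightarrow> ('a \<Rightarrow> 'a \<Rightarrow> real) \<Rightarrow> bool" where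
  "discrete_metric_on V d \<longleftrightarrow>
     (\<forall>x\<in>V. \<forall>y\<in>V. 0 \<le> d x y) \<and>
     (\<forall>x\<in>V. \<forall>y\<in>V. d x y = 0 \<longleftrightarrow> x = y) \<and>
     (\<forall>x\<in>V. \<forall>y\<in>V. d x y = d y x) \<and>
     (\<forall>x\<in>V. \<forall>y\<in>V. \<forall>z\<in>V. d x z \<le> d x y + d y z) \<and>
     (\<forall>x\<in>V. \<exists>r>0. \<forall>y\<in>V. d x y < r \<longrightarrow> y = x)"

text \<open>Y n is the jump chain, E n are i.i.d. Exp(1) variables independent of Y.
  The n-th holding time is E n / jump_rate (Y n); J n are the jump times.\<close>

definition path_prob :: "('a \<Rightarrow> 'a \<Rightarrow> real) \<Rightarrow> 'a \<Rightarrow> 'a list \<Rightarrow> real" where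
  "path_prob w x ys =
     (if hd ys = x then 1 else 0) * (\<Prod>i<length ys - 1. jump_prob w (ys ! i) (ys ! Suc i))"

definition minimal_chain ::
  "'a set \<Rightarrow> ('a \<Rightarrow> 'a \<Rightarrow> real) \<Rightarrow> ('a \<Rightarrow> real) \<Rightarrow> 'a \<Rightarrow> 'w measure
    \<Rightarrow> (nat \<Rightarrow> 'w \<Rightarrow> 'a) \<Rightarrow> (nat \<Rightarrow> 'w \<Rightarrow> real) \<Rightarrow> bool" where
  "minimal_chain V w \<mu> x M Y E \<longleftrightarrow>
     prob_space M \<and>
     (\<forall>n. Y n \<in> M \<rightarrow>\<^sub>M count_space UNIV) \<and>
     (\<forall>n. E n \<in> borel_measurable M) \<and>
     (\<forall>n ys ts. length ys = Suc n \<longrightarrow> length ts = n \<longrightarrow> (\<forall>t\<in>set ts. 0 \<le> t) \<longrightarrow>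
        measure M {\<omega> \<in> space M. (\<forall>i\<le>n. Y i \<omega> = ys ! i) \<and> (\<forall>i<n. ts ! i < E i \<omega>)}
          = path_prob w x ys * exp (- sum_list ts))"

definition jump_time ::
  "('a \<Rightarrow> 'a \<Rightarrow> real) \<Rightarrow> ('a \<Rightarrow> real) \<Rightarrow> (nat \<Rightarrow> 'w \<Rightarrow> 'a) \<Rightarrow> (nat \<Rightarrow> 'w \<Rightarrow> real)
     \<Rightarrow> nat \<Rightarrow> 'w \<Rightarrow> real" where
  "jump_time w \<mu> Y E n \<omega> = (\<Sum>i<n. E i \<omega> / jump_rate w \<mu> (Y i \<omega>))"

definition lifetime ::
  "('a \<Rightarrow> 'a \<Rightarrow> real) \<Rightarrow> ('a \<Rightarrow> real) \<Rightarrow> (nat \<Rightarrow> 'w \<Rightarrow> 'a) \<Rightarrow> (nat \<Rightarrow> 'w \<Rightarrow> real)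
     \<Rightarrow> 'w \<Rightarrow> ereal" where
  "lifetime w \<mu> Y E \<omega> = (SUP n. ereal (jump_time w \<mu> Y E n \<omega>))"

text \<open>The continuous-time process X_t = Y_n for J_n <= t < J_{n+1} (meaningful for t < zeta).\<close>

definition chain_state ::
  "('a \<Rightarrow> 'a \<Rightarrow> real) \<Rightarrow> ('a \<Rightarrow> real) \<Rightarrow> (nat \<Rightarrow> 'w \<Rightarrow> 'a) \<Rightarrow> (nat \<Rightarrow> 'w \<Rightarrow> real)
     \<Rightarrow> real \<Rightarrow> 'w \<Rightarrow> 'a" where
  "chain_state w \<mu> Y E t \<omega> = Y (LEAST n. t < jump_time w \<mu> Y E (Suc n) \<omega>) \<omega>"

definition upper_rate_function ::
  "('a \<Rightarrow> 'a \<Rightarrow> real) \<Rightarrow> ('a \<Rightarrow> real) \<Rightarrow> ('a \<Rightarrow> 'a \<Rightarrow> real) \<Rightarrow> 'a \<Rightarrow> 'w measure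
     \<Rightarrow> (nat \<Rightarrow> 'w \<Rightarrow> 'a) \<Rightarrow> (nat \<Rightarrow> 'w \<Rightarrow> real) \<Rightarrow> (real \<Rightarrow> real) \<Rightarrow> bool" where
  "upper_rate_function w \<mu> d xbar M Y E R \<longleftrightarrow>
     (\<forall>t\<ge>0. 0 \<le> R t) \<and> mono_on {0..} R \<and>
     (\<exists>T :: 'w \<Rightarrow> real. AE \<omega> in M.
        ereal (T \<omega>) < lifetime w \<mu> Y E \<omega> \<and>
        (\<forall>t. 0 \<le> t \<and> T \<omega> \<le> t \<and> ereal t < lifetime w \<mu> Y E \<omega> \<longrightarrow>
              d (chain_state w \<mu> Y E t \<omega>) xbar \<le> R t))"

definition conservative_chain ::
  "'a set \<Rightarrow> ('a \<Rightarrow> 'a \<Rightarrow> real) \<Rightarrow> ('a \<Rightarrow> real) \<Rightarrow> ('a \<Rightarrow> 'w measure)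
     \<Rightarrow> ('a \<Rightarrow> nat \<Rightarrow> 'w \<Rightarrow> 'a) \<Rightarrow> ('a \<Rightarrow> nat \<Rightarrow> 'w \<Rightarrow> real) \<Rightarrow> bool" where
  "conservative_chain V w \<mu> M Y E \<longleftrightarrow>
     (\<forall>x\<in>V. AE \<omega> in M x. lifetime w \<mu> (Y x) (E x) \<omega> = \<infinity>)"

end

theory Submission
  imports Defs
begin

lemma uniq_box:
  fixes M1 M2 :: "'w measure" and F1 F2 :: "nat \<Rightarrow> 'w \<Rightarrow> real" and g :: "(nat \<Rightarrow> real) \<Rightarrow> real"
  assumes fm1: "finite_measure M1" and fm2: "finite_measure M2"
    and A1: "A1 \<in> sets M1" and A2: "A2 \<in> sets M2"
    and F1[measurable]: "\<And>i. F1 i \<in> borel_measurable M1"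
    and F2[measurable]: "\<And>i. F2 i \<in> borel_measurable M2"
    and c: "0 \<le> c"
    and eq: "\<And>a. measure M1 {\<omega>\<in>A1. \<forall>i<n. a i < F1 i \<omega>} = c * measure M2 {\<omega>\<in>A2. \<forall>i<n. a i < F2 i \<omega>}"
    and g[measurable]: "g \<in> borel_measurable (PiM {..<n} (\<lambda>_. borel :: real measure))"
  shows "measure M1 {\<omega>\<in>A1. g (\<lambda>i\<in>{..<n}. F1 i \<omega>) \<le> L}
       = c * measure M2 {\<omega>\<in>A2. g (\<lambda>i\<in>{..<n}. F2 i \<omega>) \<le> L}"
proof -
  interpret f1: finite_measure M1 by (rule fm1)
  interpret f2: finite_measure M2 by (rule fm2)
  define I where "I = {..<n}"
  define P where "P = (PiM I (\<lambda>_. borel :: real measure))"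
  define \<Omega> where "\<Omega> = (\<Pi>\<^sub>E i\<in>I. (UNIV::real set))"
  define G where "G = {{f\<in>\<Omega>. \<forall>i\<in>I. f i \<in> A i} | A. A \<in> Pi I (\<lambda>_. range greaterThan)}"
  have sP: "sets P = sigma_sets \<Omega> G"
  proof -
    have "sets P = sets (\<Pi>\<^sub>M i\<in>I. sigma UNIV (range greaterThan :: real set set))"
      unfolding P_def by (simp add: borel_Ioi[symmetric])
    also have "\<dots> = sets (sigma \<Omega> {{f\<in>\<Omega>. \<forall>i\<in>j. f i \<in> A i} | A j. j \<in> {I} \<and> A \<in> Pi j (\<lambda>_. range greaterThan)})"
      unfolding \<Omega>_def
    proof (rule sets_PiM_sigma)
      fix i assume "i \<in> I"
      show "\<exists>S\<subseteq>range greaterThan. countable S \<and> (UNIV::real set) = \<Union>S"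
      proof (intro exI conjI)
        show "range (\<lambda>j::nat. {- real j<..}) \<subseteq> range greaterThan" by auto
        show "countable (range (\<lambda>j::nat. {- real j<..}))" by auto
        show "(UNIV::real set) = \<Union>(range (\<lambda>j::nat. {- real j<..}))"
        proof (safe)
          fix x :: real
          obtain j :: nat where "- x < real j" using reals_Archimedean2 by blast
          then show "x \<in> \<Union>(range (\<lambda>j::nat. {- real j<..}))" by (auto intro!: exI[of _ j])
        qed auto
      qed
    qed (auto simp: I_def)
    also have "{{f\<in>\<Omega>. \<forall>i\<in>j. f i \<in> A i} | A j. j \<in> {I} \<and> A \<in> Pi j (\<lambda>_. range greaterThan)} = G"
      unfolding G_def by auto
    finally have "sets P = sets (sigma \<Omega> G)" .
    moreover have "G \<subseteq> Pow \<Omega>" by (auto simp: G_def)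
    ultimately show ?thesis by simp
  qed
  define f1 where "f1 = (\<lambda>\<omega>. \<lambda>i\<in>I. F1 i \<omega>)"
  define f2 where "f2 = (\<lambda>\<omega>. \<lambda>i\<in>I. F2 i \<omega>)"
  have mf1: "f1 \<in> measurable M1 P" unfolding f1_def P_def by measurable
  have mf2: "f2 \<in> measurable M2 P" unfolding f2_def P_def by measurable
  define N1 where "N1 = distr (restrict_space M1 A1) P f1"
  define N2 where "N2 = scale_measure (ennreal c) (distr (restrict_space M2 A2) P f2)"
  have mf1': "f1 \<in> measurable (restrict_space M1 A1) P" using mf1 by (rule measurable_restrict_space1)
  have mf2': "f2 \<in> measurable (restrict_space M2 A2) P" using mf2 by (rule measurable_restrict_space1)
  have sp1: "space (restrict_space M1 A1) = A1" using A1 by simp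
  have sp2: "space (restrict_space M2 A2) = A2" using A2 by simp
  have e1: "emeasure N1 X = emeasure M1 {\<omega>\<in>A1. f1 \<omega> \<in> X}" if X: "X \<in> sets P" for X
  proof -
    have "emeasure N1 X = emeasure (restrict_space M1 A1) (f1 -` X \<inter> A1)"
      unfolding N1_def using emeasure_distr[OF mf1' X] sp1 by simp
    also have "\<dots> = emeasure M1 (f1 -` X \<inter> A1)"
      using A1 by (intro emeasure_restrict_space) auto
    also have "f1 -` X \<inter> A1 = {\<omega>\<in>A1. f1 \<omega> \<in> X}" by blast
    finally show ?thesis .
  qed
  have e2: "emeasure N2 X = ennreal c * emeasure M2 {\<omega>\<in>A2. f2 \<omega> \<in> X}" if X: "X \<in> sets P" for X
  proof -
    have "emeasure (distr (restrict_space M2 A2) P f2) X = emeasure (restrict_space M2 A2) (f2 -` X \<inter> A2)"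
      using emeasure_distr[OF mf2' X] sp2 by simp
    also have "\<dots> = emeasure M2 (f2 -` X \<inter> A2)"
      using A2 by (intro emeasure_restrict_space) auto
    also have "f2 -` X \<inter> A2 = {\<omega>\<in>A2. f2 \<omega> \<in> X}" by blast
    finally show ?thesis unfolding N2_def by simp
  qed
  have GP: "G \<subseteq> sets P" using sP by auto
  have Gmem: "X \<in> G \<longleftrightarrow> (\<exists>A. X = {f\<in>\<Omega>. \<forall>i\<in>I. f i \<in> A i} \<and> A \<in> Pi I (\<lambda>_. range greaterThan))" for X
    unfolding G_def by (rule mem_Collect_eq)
  have "N1 = N2"
  proof (rule measure_eqI_generator_eq[where E=G and \<Omega>=\<Omega> and A="\<lambda>j. {f\<in>\<Omega>. \<forall>i\<in>I. f i \<in> {- real j<..}}"])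
    show "Int_stable G"
    proof (rule Int_stableI)
      fix X Z assume XG: "X \<in> G" and ZG: "Z \<in> G"
      have "\<exists>A. X = {f\<in>\<Omega>. \<forall>i\<in>I. f i \<in> A i} \<and> A \<in> Pi I (\<lambda>_. range greaterThan)"
        using XG by (simp only: Gmem)
      then obtain A where A2: "X = {f\<in>\<Omega>. \<forall>i\<in>I. f i \<in> A i}" and A1: "A \<in> Pi I (\<lambda>_. range greaterThan)"
        by (elim exE conjE)
      have "\<exists>B. Z = {f\<in>\<Omega>. \<forall>i\<in>I. f i \<in> B i} \<and> B \<in> Pi I (\<lambda>_. range greaterThan)"
        using ZG by (simp only: Gmem)
      then obtain B where B2: "Z = {f\<in>\<Omega>. \<forall>i\<in>I. f i \<in> B i}" and B1: "B \<in> Pi I (\<lambda>_. range greaterThan)"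
        by (elim exE conjE)
      have XZ: "X \<inter> Z = {f\<in>\<Omega>. \<forall>i\<in>I. f i \<in> A i \<inter> B i}" unfolding A2 B2 by blast
      have AB: "(\<lambda>i. A i \<inter> B i) \<in> Pi I (\<lambda>_. range greaterThan)"
      proof (rule Pi_I)
        fix i assume "i \<in> I"
        then have "A i \<in> range greaterThan" "B i \<in> range greaterThan"
          using A1 B1 by (auto simp only: Pi_iff)
        then obtain a b where "A i = {a<..}" "B i = {b<..}" by (elim rangeE) 
        then have "A i \<inter> B i = {max a b<..}" by auto
        then show "A i \<inter> B i \<in> range greaterThan" by simp
      qed
      show "X \<inter> Z \<in> G" unfolding Gmem by (intro exI[of _ "\<lambda>i. A i \<inter> B i"] conjI XZ AB)
    qed
    show "G \<subseteq> Pow \<Omega>" using Gmem by blast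
    show "sets N1 = sigma_sets \<Omega> G" unfolding N1_def using sP by simp
    show "sets N2 = sigma_sets \<Omega> G" unfolding N2_def using sP by simp
    show rG: "range (\<lambda>j. {f\<in>\<Omega>. \<forall>i\<in>I. f i \<in> {- real j<..}}) \<subseteq> G"
    proof (rule image_subsetI)
      fix j show "{f\<in>\<Omega>. \<forall>i\<in>I. f i \<in> {- real j<..}} \<in> G"
        unfolding Gmem by (rule exI[of _ "\<lambda>_. {- real j<..}"]) simp
    qed
    show "(\<Union>j. {f\<in>\<Omega>. \<forall>i\<in>I. f i \<in> {- real j<..}}) = \<Omega>"
    proof (rule set_eqI, rule iffI)
      fix f assume "f \<in> (\<Union>j. {f\<in>\<Omega>. \<forall>i\<in>I. f i \<in> {- real j<..}})"
      then show "f \<in> \<Omega>" by blast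
    next
      fix f assume "f \<in> \<Omega>"
      obtain j :: nat where j: "(\<Sum>i\<in>I. \<bar>f i\<bar>) < real j" using reals_Archimedean2 by blast
      have "\<forall>i\<in>I. f i \<in> {- real j<..}"
      proof
        fix i assume "i \<in> I"
        then have "\<bar>f i\<bar> \<le> (\<Sum>i\<in>I. \<bar>f i\<bar>)"
          by (intro member_le_sum) (auto simp: I_def)
        with j show "f i \<in> {- real j<..}" by auto
      qed
      with \<open>f \<in> \<Omega>\<close> show "f \<in> (\<Union>j. {f\<in>\<Omega>. \<forall>i\<in>I. f i \<in> {- real j<..}})" by blast
    qed
    fix j
    have "{f\<in>\<Omega>. \<forall>i\<in>I. f i \<in> {- real j<..}} \<in> sets P" using rG GP by blast
    then show "emeasure N1 {f\<in>\<Omega>. \<forall>i\<in>I. f i \<in> {- real j<..}} \<noteq> \<infinity>"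
      using e1 f1.emeasure_finite by simp
  next
    fix X assume "X \<in> G"
    have "\<exists>A. X = {f\<in>\<Omega>. \<forall>i\<in>I. f i \<in> A i} \<and> A \<in> Pi I (\<lambda>_. range greaterThan)"
      using \<open>X \<in> G\<close> by (simp only: Gmem)
    then obtain A where A2': "X = {f\<in>\<Omega>. \<forall>i\<in>I. f i \<in> A i}" and A1': "A \<in> Pi I (\<lambda>_. range greaterThan)"
      by (elim exE conjE)
    note A = A1' A2'
    have XP: "X \<in> sets P" using \<open>X \<in> G\<close> GP by blast
    have "\<forall>i\<in>I. \<exists>a. A i = {a<..}"
    proof
      fix i assume "i \<in> I"
      then have "A i \<in> range greaterThan" using A1' by (auto simp only: Pi_iff)
      then show "\<exists>a. A i = {a<..}" by blast
    qed
    from bchoice[OF this] obtain a where a': "\<forall>i\<in>I. A i = {a i<..}" by (elim exE)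
    have a: "\<And>i. i \<in> I \<Longrightarrow> A i = {a i<..}" using a' by blast
    have X1: "{\<omega>\<in>A1. f1 \<omega> \<in> X} = {\<omega>\<in>A1. \<forall>i<n. a i < F1 i \<omega>}"
    proof -
      have "f1 \<omega> \<in> X \<longleftrightarrow> (\<forall>i\<in>I. F1 i \<omega> \<in> A i)" for \<omega>
        unfolding A(2) f1_def \<Omega>_def by simp
      also have "(\<forall>i\<in>I. F1 i \<omega> \<in> A i) \<longleftrightarrow> (\<forall>i<n. a i < F1 i \<omega>)" for \<omega>
        using a by (auto simp: I_def)
      finally show ?thesis by simp
    qed
    have X2: "{\<omega>\<in>A2. f2 \<omega> \<in> X} = {\<omega>\<in>A2. \<forall>i<n. a i < F2 i \<omega>}"
    proof -
      have "f2 \<omega> \<in> X \<longleftrightarrow> (\<forall>i\<in>I. F2 i \<omega> \<in> A i)" for \<omega>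
        unfolding A(2) f2_def \<Omega>_def by simp
      also have "(\<forall>i\<in>I. F2 i \<omega> \<in> A i) \<longleftrightarrow> (\<forall>i<n. a i < F2 i \<omega>)" for \<omega>
        using a by (auto simp: I_def)
      finally show ?thesis by simp
    qed
    have m1: "{\<omega>\<in>A1. \<forall>i<n. a i < F1 i \<omega>} \<in> sets M1" using A1 by measurable
    have m2: "{\<omega>\<in>A2. \<forall>i<n. a i < F2 i \<omega>} \<in> sets M2" using A2 by measurable
    have "emeasure N1 X = emeasure M1 {\<omega>\<in>A1. \<forall>i<n. a i < F1 i \<omega>}"
      using e1[OF XP] X1 by simp
    also have "\<dots> = ennreal (measure M1 {\<omega>\<in>A1. \<forall>i<n. a i < F1 i \<omega>})"
      by (rule f1.emeasure_eq_measure)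
    also have "\<dots> = ennreal c * ennreal (measure M2 {\<omega>\<in>A2. \<forall>i<n. a i < F2 i \<omega>})"
      using eq c by (simp add: ennreal_mult)
    also have "\<dots> = ennreal c * emeasure M2 {\<omega>\<in>A2. \<forall>i<n. a i < F2 i \<omega>}"
      by (simp add: f2.emeasure_eq_measure)
    also have "\<dots> = emeasure N2 X"
      using e2[OF XP] X2 by simp
    finally show "emeasure N1 X = emeasure N2 X" .
  qed
  define B where "B = {e\<in>space P. g e \<le> L}"
  have B: "B \<in> sets P"
  proof -
    have "g -` {..L} \<inter> space P \<in> sets P" using g unfolding P_def I_def by (rule measurable_sets) (simp add: atMost_borel)
    moreover have "B = g -` {..L} \<inter> space P" unfolding B_def by auto
    ultimately show ?thesis by simp
  qed
  have B1: "{\<omega>\<in>A1. f1 \<omega> \<in> B} = {\<omega>\<in>A1. g (\<lambda>i\<in>{..<n}. F1 i \<omega>) \<le> L}"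
  proof -
    have "f1 \<omega> \<in> space P" if "\<omega> \<in> A1" for \<omega>
      using measurable_space[OF mf1] sets.sets_into_space[OF A1] that by blast
    then show ?thesis unfolding B_def f1_def I_def by blast
  qed
  have B2: "{\<omega>\<in>A2. f2 \<omega> \<in> B} = {\<omega>\<in>A2. g (\<lambda>i\<in>{..<n}. F2 i \<omega>) \<le> L}"
  proof -
    have "f2 \<omega> \<in> space P" if "\<omega> \<in> A2" for \<omega>
      using measurable_space[OF mf2] sets.sets_into_space[OF A2] that by blast
    then show ?thesis unfolding B_def f2_def I_def by blast
  qed
  have "ennreal (measure M1 {\<omega>\<in>A1. g (\<lambda>i\<in>{..<n}. F1 i \<omega>) \<le> L})
      = emeasure M1 {\<omega>\<in>A1. g (\<lambda>i\<in>{..<n}. F1 i \<omega>) \<le> L}"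
    by (simp add: f1.emeasure_eq_measure)
  also have "\<dots> = emeasure N1 B" using e1[OF B] B1 by simp
  also have "\<dots> = emeasure N2 B" using \<open>N1 = N2\<close> by simp
  also have "\<dots> = ennreal c * emeasure M2 {\<omega>\<in>A2. g (\<lambda>i\<in>{..<n}. F2 i \<omega>) \<le> L}"
    using e2[OF B] B2 by simp
  also have "\<dots> = ennreal (c * measure M2 {\<omega>\<in>A2. g (\<lambda>i\<in>{..<n}. F2 i \<omega>) \<le> L})"
    using c by (simp add: f2.emeasure_eq_measure ennreal_mult)
  finally show ?thesis using c by (simp add: ennreal_inj)
qed

definition gpaths :: "('a \<Rightarrow> 'a \<Rightarrow> real) \<Rightarrow> 'a \<Rightarrow> nat \<Rightarrow> 'a list set" where
  "gpaths w s n = {ys. length ys = Suc n \<and> hd ys = s \<and> (\<forall>i<n. 0 < w (ys!i) (ys!Suc i))}"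

context
  fixes V :: "'a set" and w :: "'a \<Rightarrow> 'a \<Rightarrow> real" and \<mu> :: "'a \<Rightarrow> real"
  assumes G: "simple_weighted_graph V w \<mu>"
begin

lemma w_nonneg: "0 \<le> w x y" using G unfolding simple_weighted_graph_def by blast

lemma w_pos_V: "0 < w x y \<Longrightarrow> x \<in> V \<and> y \<in> V" using G unfolding simple_weighted_graph_def by blast

lemma nbr_finite: "finite {y. 0 < w x y}"
proof (cases "x \<in> V")
  case True then show ?thesis using G unfolding simple_weighted_graph_def by blast
next
  case False then have "{y. 0 < w x y} = {}" using w_pos_V by blast
  then show ?thesis by simp
qed

lemma has_nbr: assumes "x \<in> V" shows "\<exists>y. 0 < w x y"
proof -
  have inf: "infinite V" using G unfolding simple_weighted_graph_def by blast
  have "V \<noteq> {x}" using inf by auto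
  then obtain u where u: "u \<in> V" "u \<noteq> x" using assms by blast
  have "(x, u) \<in> {(a, b). 0 < w a b}\<^sup>*" using G assms u unfolding simple_weighted_graph_def by blast
  then show ?thesis using u(2)
    by (cases rule: converse_rtranclE) auto
qed

lemma wdeg_pos: assumes "x \<in> V" shows "0 < wdeg w x"
proof -
  obtain y where y: "0 < w x y" using has_nbr assms by blast
  have "w x y \<le> wdeg w x" unfolding wdeg_def
    using y nbr_finite by (intro member_le_sum) auto
  with y show ?thesis by simp
qed

lemma wdeg_nonneg: "0 \<le> wdeg w x"
  unfolding wdeg_def by (intro sum_nonneg) auto

lemma rate_pos: assumes "x \<in> V" shows "0 < jump_rate w \<mu> x"
proof -
  have "0 < \<mu> x" using G assms unfolding simple_weighted_graph_def by blast
  then show ?thesis using wdeg_pos[OF assms] unfolding jump_rate_def by simp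
qed

lemma jump_prob_nonneg: "0 \<le> jump_prob w x y"
  unfolding jump_prob_def using w_nonneg wdeg_nonneg by simp

lemma jump_prob_sum: assumes "x \<in> V" shows "(\<Sum>y\<in>{y. 0 < w x y}. jump_prob w x y) = 1"
  using wdeg_pos[OF assms] unfolding jump_prob_def wdeg_def
  by (simp add: sum_divide_distrib[symmetric])

lemma path_prob_nonneg: "0 \<le> path_prob w x ys"
  unfolding path_prob_def by (intro mult_nonneg_nonneg prod_nonneg jump_prob_nonneg) auto

lemma path_prob_snoc:
  assumes "ys \<noteq> []"
  shows "path_prob w x (ys @ [z]) = path_prob w x ys * jump_prob w (last ys) z"
proof -
  obtain m where m: "length ys = Suc m" using assms by (cases ys) auto
  have hd: "hd (ys @ [z]) = hd ys" using assms by simp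
  have "(\<Prod>i<length (ys @ [z]) - 1. jump_prob w ((ys @ [z]) ! i) ((ys @ [z]) ! Suc i))
      = (\<Prod>i<Suc m. jump_prob w ((ys @ [z]) ! i) ((ys @ [z]) ! Suc i))" using m by simp
  also have "\<dots> = (\<Prod>i<m. jump_prob w ((ys @ [z]) ! i) ((ys @ [z]) ! Suc i)) * jump_prob w (last ys) z"
    using m assms by (simp add: nth_append last_conv_nth)
  also have "(\<Prod>i<m. jump_prob w ((ys @ [z]) ! i) ((ys @ [z]) ! Suc i)) = (\<Prod>i<m. jump_prob w (ys ! i) (ys ! Suc i))"
    using m by (intro prod.cong) (auto simp: nth_append)
  finally show ?thesis unfolding path_prob_def using hd m by simp
qed

lemma path_prob_append:
  assumes "p \<noteq> []"
  shows "path_prob w x (p @ ys) = path_prob w x p * path_prob w (last p) (last p # ys)"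
proof (induction ys rule: rev_induct)
  case Nil then show ?case by (simp add: path_prob_def)
next
  case (snoc z ys)
  have "path_prob w x (p @ ys @ [z]) = path_prob w x ((p @ ys) @ [z])" by simp
  also have "\<dots> = path_prob w x (p @ ys) * jump_prob w (last (p @ ys)) z"
    using assms by (intro path_prob_snoc) auto
  also have "\<dots> = path_prob w x p * (path_prob w (last p) (last p # ys) * jump_prob w (last (last p # ys)) z)"
    using snoc assms by (cases "ys = []") auto
  also have "path_prob w (last p) (last p # ys) * jump_prob w (last (last p # ys)) z
       = path_prob w (last p) ((last p # ys) @ [z])"
    by (rule path_prob_snoc[symmetric]) simp
  finally show ?case by simp
qed

lemma gpaths_zero: "gpaths w s 0 = {[s]}"
  unfolding gpaths_def by (auto simp: length_Suc_conv)

lemma gpaths_Suc: "gpaths w s (Suc n) = (\<lambda>(ys, z). ys @ [z]) ` (SIGMA ys:gpaths w s n. {z. 0 < w (last ys) z})"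
proof (intro set_eqI iffI)
  fix zs assume zs: "zs \<in> gpaths w s (Suc n)"
  then have len: "length zs = Suc (Suc n)" unfolding gpaths_def by simp
  define ys where "ys = butlast zs"
  define z where "z = last zs"
  have zsy: "zs = ys @ [z]" unfolding ys_def z_def using len
    by (metis append_butlast_last_id list.size(3) nat.distinct(1))
  have ly: "length ys = Suc n" using len unfolding ys_def by simp
  have yg: "ys \<in> gpaths w s n" unfolding gpaths_def
  proof (intro CollectI conjI allI impI)
    show "length ys = Suc n" by fact
    show "hd ys = s" using zs zsy ly unfolding gpaths_def by (cases ys) auto
    fix i assume "i < n"
    then show "0 < w (ys ! i) (ys ! Suc i)" using zs zsy ly unfolding gpaths_def
      by (auto simp: nth_append dest!: spec[of _ i])
  qed
  have ez: "0 < w (last ys) z"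
  proof -
    have "0 < w (zs ! n) (zs ! Suc n)" using zs unfolding gpaths_def by auto
    moreover have "zs ! n = last ys" "zs ! Suc n = z" using zsy ly
      by (cases ys rule: rev_cases; auto simp: nth_append)+
    ultimately show ?thesis by simp
  qed
  show "zs \<in> (\<lambda>(ys, z). ys @ [z]) ` (SIGMA ys:gpaths w s n. {z. 0 < w (last ys) z})"
  proof -
    have "(ys, z) \<in> (SIGMA ys:gpaths w s n. {z. 0 < w (last ys) z})" using yg ez by blast
    then show ?thesis using zsy by (auto intro!: image_eqI[of _ _ "(ys, z)"])
  qed
next
  fix zs assume "zs \<in> (\<lambda>(ys, z). ys @ [z]) ` (SIGMA ys:gpaths w s n. {z. 0 < w (last ys) z})"
  then obtain p where p: "p \<in> (SIGMA ys:gpaths w s n. {z. 0 < w (last ys) z})" and zsp: "zs = (\<lambda>(ys, z). ys @ [z]) p"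
    by (elim imageE)
  obtain ys z where pyz: "p = (ys, z)" by (cases p)
  have ys: "ys \<in> gpaths w s n" and z: "0 < w (last ys) z" using p pyz by auto
  have zs: "zs = ys @ [z]" using zsp pyz by simp
  have ly: "length ys = Suc n" and hy: "hd ys = s" and ey: "\<forall>i<n. 0 < w (ys!i) (ys!Suc i)"
    using ys unfolding gpaths_def by auto
  show "zs \<in> gpaths w s (Suc n)" unfolding gpaths_def
  proof (intro CollectI conjI allI impI)
    show "length zs = Suc (Suc n)" using zs ly by simp
    show "hd zs = s" using zs ly hy by (cases ys) auto
    fix i assume i: "i < Suc n"
    show "0 < w (zs ! i) (zs ! Suc i)"
    proof (cases "i < n")
      case True then show ?thesis using zs ly ey by (auto simp: nth_append)
    next
      case False then have "i = n" using i by simp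
      have "last ys = ys ! n" using ly by (cases ys rule: rev_cases) (auto simp: nth_append)
      then show ?thesis using zs ly z \<open>i = n\<close> by (auto simp: nth_append)
    qed
  qed
qed

lemma gpaths_finite: "finite (gpaths w s n)"
proof (induction n)
  case 0 then show ?case by (simp add: gpaths_zero)
next
  case (Suc n) then show ?case unfolding gpaths_Suc
    by (intro finite_imageI finite_SigmaI nbr_finite)
qed

lemma gpaths_V: assumes "ys \<in> gpaths w s n" "s \<in> V" "i \<le> n" shows "ys ! i \<in> V"
  using assms(3)
proof (induction i)
  case 0
  have "ys \<noteq> []" "hd ys = s" using assms(1) unfolding gpaths_def by auto
  then show ?case using assms(2) by (simp add: hd_conv_nth[symmetric])
next
  case (Suc i)
  then have "0 < w (ys ! i) (ys ! Suc i)" using assms(1) unfolding gpaths_def by auto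
  then show ?case using w_pos_V by blast
qed

lemma gpaths_ne: "ys \<in> gpaths w s n \<Longrightarrow> ys \<noteq> []" unfolding gpaths_def by auto

lemma gpaths_last_V: assumes "ys \<in> gpaths w s n" "s \<in> V" shows "last ys \<in> V"
proof -
  have "length ys = Suc n" using assms unfolding gpaths_def by simp
  then have "last ys = ys ! n" by (cases ys rule: rev_cases) (auto simp: last_conv_nth)
  then show ?thesis using gpaths_V[OF assms] by simp
qed

lemma gpaths_sum: assumes "s \<in> V" shows "(\<Sum>ys\<in>gpaths w s n. path_prob w s ys) = 1"
proof (induction n)
  case 0 then show ?case by (simp add: gpaths_zero path_prob_def)
next
  case (Suc n)
  have inj: "inj_on (\<lambda>(ys, z). ys @ [z]) (SIGMA ys:gpaths w s n. {z. 0 < w (last ys) z})"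
    by (auto simp: inj_on_def)
  have "(\<Sum>ys\<in>gpaths w s (Suc n). path_prob w s ys)
     = (\<Sum>(ys, z)\<in>(SIGMA ys:gpaths w s n. {z. 0 < w (last ys) z}). path_prob w s (ys @ [z]))"
    unfolding gpaths_Suc by (subst sum.reindex[OF inj]) (simp add: case_prod_unfold)
  also have "\<dots> = (\<Sum>ys\<in>gpaths w s n. \<Sum>z\<in>{z. 0 < w (last ys) z}. path_prob w s (ys @ [z]))"
    by (rule sum.Sigma[symmetric]) (auto intro: gpaths_finite nbr_finite)
  also have "\<dots> = (\<Sum>ys\<in>gpaths w s n. path_prob w s ys * (\<Sum>z\<in>{z. 0 < w (last ys) z}. jump_prob w (last ys) z))"
    by (intro sum.cong refl) (auto simp: path_prob_snoc gpaths_ne sum_distrib_left)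
  also have "\<dots> = (\<Sum>ys\<in>gpaths w s n. path_prob w s ys)"
    by (intro sum.cong refl) (simp add: jump_prob_sum gpaths_last_V assms)
  finally show ?case using Suc by simp
qed

lemma gpaths_char:
  fixes y :: "nat \<Rightarrow> 'a"
  shows "(y 0 = s \<and> (\<forall>i<n. 0 < w (y i) (y (Suc i)))) \<longleftrightarrow> (\<exists>ys\<in>gpaths w s n. \<forall>i\<le>n. y i = ys ! i)"
proof
  assume a: "y 0 = s \<and> (\<forall>i<n. 0 < w (y i) (y (Suc i)))"
  have "map y [0..<Suc n] \<in> gpaths w s n" unfolding gpaths_def
    using a by (auto simp: nth_map_upt hd_map simp del: upt_Suc)
  moreover have "\<forall>i\<le>n. y i = map y [0..<Suc n] ! i" by (auto simp del: upt_Suc)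
  ultimately show "\<exists>ys\<in>gpaths w s n. \<forall>i\<le>n. y i = ys ! i" by blast
next
  assume "\<exists>ys\<in>gpaths w s n. \<forall>i\<le>n. y i = ys ! i"
  then obtain ys where ys: "ys \<in> gpaths w s n" "\<forall>i\<le>n. y i = ys ! i" by blast
  then have "ys \<noteq> []" unfolding gpaths_def by auto
  with ys show "y 0 = s \<and> (\<forall>i<n. 0 < w (y i) (y (Suc i)))"
    unfolding gpaths_def by (auto simp: hd_conv_nth)
qed

lemma gpaths_unique: "ys \<in> gpaths w s n \<Longrightarrow> zs \<in> gpaths w s n \<Longrightarrow> \<forall>i\<le>n. ys ! i = zs ! i \<Longrightarrow> ys = zs"
  unfolding gpaths_def by (auto intro: nth_equalityI)

lemma path_prob_not_gpaths:
  assumes "length ys = Suc n" "ys \<notin> gpaths w s n"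
  shows "path_prob w s ys = 0"
proof (cases "hd ys = s")
  case False then show ?thesis unfolding path_prob_def by simp
next
  case True
  then obtain i where i: "i < n" "\<not> 0 < w (ys!i) (ys!Suc i)" using assms unfolding gpaths_def by auto
  then have "w (ys!i) (ys!Suc i) = 0" using w_nonneg[of "ys!i" "ys!Suc i"] by simp
  then have "jump_prob w (ys!i) (ys!Suc i) = 0" unfolding jump_prob_def by simp
  then have "(\<Prod>i<length ys - 1. jump_prob w (ys ! i) (ys ! Suc i)) = 0"
    using i assms(1) by (intro prod_zero) auto
  then show ?thesis unfolding path_prob_def by simp
qed

end

locale mchain =
  fixes V :: "'a set" and w :: "'a \<Rightarrow> 'a \<Rightarrow> real" and \<mu> :: "'a \<Rightarrow> real"
    and s :: 'a and M :: "'w measure" and Y :: "nat \<Rightarrow> 'w \<Rightarrow> 'a" and E :: "nat \<Rightarrow> 'w \<Rightarrow> real"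
  assumes G: "simple_weighted_graph V w \<mu>" and sV: "s \<in> V"
    and MC: "minimal_chain V w \<mu> s M Y E"
begin

sublocale prob_space M using MC unfolding minimal_chain_def by blast

lemma Ym[measurable]: "Y n \<in> M \<rightarrow>\<^sub>M count_space UNIV"
  using MC unfolding minimal_chain_def by blast

lemma Em[measurable]: "E n \<in> borel_measurable M"
  using MC unfolding minimal_chain_def by blast

lemma cyl_sets[measurable]: "{\<omega>\<in>space M. (\<forall>i\<le>n. Y i \<omega> = ys ! i) \<and> (\<forall>i<n. t i < E i \<omega>)} \<in> sets M"
  by measurable

lemma cyl:
  assumes len: "length ys = Suc n" and t: "\<And>i. 0 \<le> t i"
  shows "measure M {\<omega>\<in>space M. (\<forall>i\<le>n. Y i \<omega> = ys ! i) \<and> (\<forall>i<n. t i < E i \<omega>)}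
       = path_prob w s ys * exp (- (\<Sum>i<n. t i))"
proof -
  define ts where "ts = map t [0..<n]"
  have lts: "length ts = n" unfolding ts_def by simp
  have tsn: "\<And>i. i < n \<Longrightarrow> ts ! i = t i" unfolding ts_def by simp
  have tspos: "\<forall>t\<in>set ts. 0 \<le> t" unfolding ts_def using t by auto
  have sts: "sum_list ts = (\<Sum>i<n. t i)"
    unfolding ts_def by (simp add: interv_sum_list_conv_sum_set_nat atLeast0LessThan)
  have "measure M {\<omega> \<in> space M. (\<forall>i\<le>n. Y i \<omega> = ys ! i) \<and> (\<forall>i<n. ts ! i < E i \<omega>)}
      = path_prob w s ys * exp (- sum_list ts)"
  proof -
    have mc: "\<forall>n ys ts. length ys = Suc n \<longrightarrow> length ts = n \<longrightarrow> (\<forall>t\<in>set ts. 0 \<le> t) \<longrightarrow>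
        measure M {\<omega> \<in> space M. (\<forall>i\<le>n. Y i \<omega> = ys ! i) \<and> (\<forall>i<n. ts ! i < E i \<omega>)}
          = path_prob w s ys * exp (- sum_list ts)"
      using MC unfolding minimal_chain_def by (elim conjE)
    show ?thesis using mc[rule_format, OF len lts tspos[rule_format]] .
  qed
  moreover have "{\<omega> \<in> space M. (\<forall>i\<le>n. Y i \<omega> = ys ! i) \<and> (\<forall>i<n. ts ! i < E i \<omega>)}
      = {\<omega>\<in>space M. (\<forall>i\<le>n. Y i \<omega> = ys ! i) \<and> (\<forall>i<n. t i < E i \<omega>)}"
    using tsn by auto
  ultimately show ?thesis by (simp only: sts)
qed

lemma path_set_eq:
  shows "{\<omega>\<in>space M. (Y 0 \<omega> = s \<and> (\<forall>i<n. 0 < w (Y i \<omega>) (Y (Suc i) \<omega>))) \<and> (\<forall>i<n. t i < E i \<omega>)}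
      = (\<Union>ys\<in>gpaths w s n. {\<omega>\<in>space M. (\<forall>i\<le>n. Y i \<omega> = ys ! i) \<and> (\<forall>i<n. t i < E i \<omega>)})"
proof (rule set_eqI)
    fix \<omega>
    have c: "(Y 0 \<omega> = s \<and> (\<forall>i<n. 0 < w (Y i \<omega>) (Y (Suc i) \<omega>))) \<longleftrightarrow> (\<exists>ys\<in>gpaths w s n. \<forall>i\<le>n. Y i \<omega> = ys ! i)"
      by (rule gpaths_char[OF G])
    show "\<omega> \<in> {\<omega>\<in>space M. (Y 0 \<omega> = s \<and> (\<forall>i<n. 0 < w (Y i \<omega>) (Y (Suc i) \<omega>))) \<and> (\<forall>i<n. t i < E i \<omega>)}
      \<longleftrightarrow> \<omega> \<in> (\<Union>ys\<in>gpaths w s n. {\<omega>\<in>space M. (\<forall>i\<le>n. Y i \<omega> = ys ! i) \<and> (\<forall>i<n. t i < E i \<omega>)})"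
    proof -
      have "\<omega> \<in> {\<omega>\<in>space M. (Y 0 \<omega> = s \<and> (\<forall>i<n. 0 < w (Y i \<omega>) (Y (Suc i) \<omega>))) \<and> (\<forall>i<n. t i < E i \<omega>)}
        \<longleftrightarrow> \<omega> \<in> space M \<and> (Y 0 \<omega> = s \<and> (\<forall>i<n. 0 < w (Y i \<omega>) (Y (Suc i) \<omega>))) \<and> (\<forall>i<n. t i < E i \<omega>)"
        by (rule mem_Collect_eq)
      also have "\<dots> \<longleftrightarrow> \<omega> \<in> space M \<and> (\<exists>ys\<in>gpaths w s n. \<forall>i\<le>n. Y i \<omega> = ys ! i) \<and> (\<forall>i<n. t i < E i \<omega>)"
        by (simp only: c)
      also have "\<dots> \<longleftrightarrow> \<omega> \<in> (\<Union>ys\<in>gpaths w s n. {\<omega>\<in>space M. (\<forall>i\<le>n. Y i \<omega> = ys ! i) \<and> (\<forall>i<n. t i < E i \<omega>)})"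
        by blast
      finally show ?thesis .
    qed
qed

lemma path_sets:
  "{\<omega>\<in>space M. (Y 0 \<omega> = s \<and> (\<forall>i<n. 0 < w (Y i \<omega>) (Y (Suc i) \<omega>))) \<and> (\<forall>i<n. t i < E i \<omega>)} \<in> sets M"
  unfolding path_set_eq by (intro sets.finite_UN gpaths_finite[OF G] cyl_sets)

lemma path_meas:
  assumes t: "\<And>i. 0 \<le> t i"
  shows "measure M {\<omega>\<in>space M. (Y 0 \<omega> = s \<and> (\<forall>i<n. 0 < w (Y i \<omega>) (Y (Suc i) \<omega>))) \<and> (\<forall>i<n. t i < E i \<omega>)}
       = exp (- (\<Sum>i<n. t i))"
proof -
  define A where "A ys = {\<omega>\<in>space M. (\<forall>i\<le>n. Y i \<omega> = ys ! i) \<and> (\<forall>i<n. t i < E i \<omega>)}" for ys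
  have eq: "{\<omega>\<in>space M. (Y 0 \<omega> = s \<and> (\<forall>i<n. 0 < w (Y i \<omega>) (Y (Suc i) \<omega>))) \<and> (\<forall>i<n. t i < E i \<omega>)}
      = (\<Union>ys\<in>gpaths w s n. A ys)"
    unfolding A_def by (rule path_set_eq)
  have disj: "disjoint_family_on A (gpaths w s n)"
    unfolding disjoint_family_on_def A_def
  proof (intro ballI impI)
    fix ys zs assume "ys \<in> gpaths w s n" "zs \<in> gpaths w s n" "ys \<noteq> zs"
    then have "\<exists>i\<le>n. ys ! i \<noteq> zs ! i" using gpaths_unique[OF G] by blast
    then obtain i where i: "i \<le> n" "ys ! i \<noteq> zs ! i" by blast
    show "{\<omega>\<in>space M. (\<forall>i\<le>n. Y i \<omega> = ys ! i) \<and> (\<forall>i<n. t i < E i \<omega>)} \<inter>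
        {\<omega>\<in>space M. (\<forall>i\<le>n. Y i \<omega> = zs ! i) \<and> (\<forall>i<n. t i < E i \<omega>)} = {}"
    proof (rule equals0I)
      fix \<omega> assume "\<omega> \<in> {\<omega>\<in>space M. (\<forall>i\<le>n. Y i \<omega> = ys ! i) \<and> (\<forall>i<n. t i < E i \<omega>)} \<inter>
        {\<omega>\<in>space M. (\<forall>i\<le>n. Y i \<omega> = zs ! i) \<and> (\<forall>i<n. t i < E i \<omega>)}"
      then have "Y i \<omega> = ys ! i" "Y i \<omega> = zs ! i" using i(1) by auto
      then show False using i(2) by simp
    qed
  qed
  have "measure M (\<Union>ys\<in>gpaths w s n. A ys) = (\<Sum>ys\<in>gpaths w s n. measure M (A ys))"
  proof (rule measure_finite_Union)
    show "finite (gpaths w s n)" by (rule gpaths_finite[OF G])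
    show "A ` gpaths w s n \<subseteq> sets M" unfolding A_def using cyl_sets by blast
    show "disjoint_family_on A (gpaths w s n)" by (rule disj)
    show "emeasure M (A ys) \<noteq> \<infinity>" for ys unfolding infinity_ennreal_def by (rule emeasure_finite)
  qed
  also have "\<dots> = (\<Sum>ys\<in>gpaths w s n. path_prob w s ys * exp (- (\<Sum>i<n. t i)))"
  proof (rule sum.cong[OF refl])
    fix ys assume "ys \<in> gpaths w s n"
    then have "length ys = Suc n" unfolding gpaths_def by simp
    then show "measure M (A ys) = path_prob w s ys * exp (- (\<Sum>i<n. t i))"
      unfolding A_def by (rule cyl) (rule t)
  qed
  also have "\<dots> = exp (- (\<Sum>i<n. t i))"
    by (simp add: sum_distrib_right[symmetric] gpaths_sum[OF G sV])
  finally show ?thesis using eq by simp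
qed

lemma path_AE: "AE \<omega> in M. (Y 0 \<omega> = s \<and> (\<forall>i<n. 0 < w (Y i \<omega>) (Y (Suc i) \<omega>))) \<and> (\<forall>i<n. 0 < E i \<omega>)"
proof -
  have "prob {\<omega>\<in>space M. (Y 0 \<omega> = s \<and> (\<forall>i<n. 0 < w (Y i \<omega>) (Y (Suc i) \<omega>))) \<and> (\<forall>i<n. (0::real) < E i \<omega>)} = 1"
    using path_meas[of "\<lambda>_. 0" n] by simp
  then have "AE \<omega> in M. \<omega> \<in> {\<omega>\<in>space M. (Y 0 \<omega> = s \<and> (\<forall>i<n. 0 < w (Y i \<omega>) (Y (Suc i) \<omega>))) \<and> (\<forall>i<n. (0::real) < E i \<omega>)}"
    by (rule AE_prob_1)
  then show ?thesis
  proof (rule AE_mp, intro AE_I2 impI)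
    fix \<omega> assume "\<omega> \<in> {\<omega>\<in>space M. (Y 0 \<omega> = s \<and> (\<forall>i<n. 0 < w (Y i \<omega>) (Y (Suc i) \<omega>))) \<and> (\<forall>i<n. (0::real) < E i \<omega>)}"
    then show "(Y 0 \<omega> = s \<and> (\<forall>i<n. 0 < w (Y i \<omega>) (Y (Suc i) \<omega>))) \<and> (\<forall>i<n. 0 < E i \<omega>)" by simp
  qed
qed

lemma path_AE_all: "AE \<omega> in M. Y 0 \<omega> = s \<and> (\<forall>i. 0 < w (Y i \<omega>) (Y (Suc i) \<omega>)) \<and> (\<forall>i. 0 < E i \<omega>)"
proof -
  have "AE \<omega> in M. \<forall>n. (Y 0 \<omega> = s \<and> (\<forall>i<Suc n. 0 < w (Y i \<omega>) (Y (Suc i) \<omega>))) \<and> (\<forall>i<Suc n. 0 < E i \<omega>)"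
    using path_AE by (subst AE_all_countable) auto
  then show ?thesis
  proof (rule AE_mp, intro AE_I2 impI)
    fix \<omega> assume H: "\<forall>n. (Y 0 \<omega> = s \<and> (\<forall>i<Suc n. 0 < w (Y i \<omega>) (Y (Suc i) \<omega>))) \<and> (\<forall>i<Suc n. 0 < E i \<omega>)"
    have "Y 0 \<omega> = s" using H by blast
    moreover have "0 < w (Y i \<omega>) (Y (Suc i) \<omega>)" for i using H[rule_format, of i] by blast
    moreover have "0 < E i \<omega>" for i using H[rule_format, of i] by blast
    ultimately show "Y 0 \<omega> = s \<and> (\<forall>i. 0 < w (Y i \<omega>) (Y (Suc i) \<omega>)) \<and> (\<forall>i. 0 < E i \<omega>)" by blast
  qed
qed

lemma Y_in_V:
  assumes "Y 0 \<omega> = s" "\<forall>i. 0 < w (Y i \<omega>) (Y (Suc i) \<omega>)"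
  shows "Y i \<omega> \<in> V"
proof (cases i)
  case 0 then show ?thesis using assms sV by simp
next
  case (Suc j) then show ?thesis using assms(2) w_pos_V[OF G] by blast
qed

lemma E_sets: "{\<omega>\<in>space M. \<forall>i<n. t i < E i \<omega>} \<in> sets M"
  by measurable

lemma E_tail:
  assumes t: "\<And>i. 0 \<le> t i"
  shows "prob {\<omega>\<in>space M. \<forall>i<n. t i < E i \<omega>} = exp (- (\<Sum>i<n. t i))"
proof -
  have "prob {\<omega>\<in>space M. \<forall>i<n. t i < E i \<omega>}
      = prob {\<omega>\<in>space M. (Y 0 \<omega> = s \<and> (\<forall>i<n. 0 < w (Y i \<omega>) (Y (Suc i) \<omega>))) \<and> (\<forall>i<n. t i < E i \<omega>)}"
  proof (rule measure_eq_AE)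
    show "AE \<omega> in M. (\<omega> \<in> {\<omega>\<in>space M. \<forall>i<n. t i < E i \<omega>}) =
        (\<omega> \<in> {\<omega>\<in>space M. (Y 0 \<omega> = s \<and> (\<forall>i<n. 0 < w (Y i \<omega>) (Y (Suc i) \<omega>))) \<and> (\<forall>i<n. t i < E i \<omega>)})"
      using path_AE[of n]
    proof (rule AE_mp, intro AE_I2 impI)
      fix \<omega> assume "(Y 0 \<omega> = s \<and> (\<forall>i<n. 0 < w (Y i \<omega>) (Y (Suc i) \<omega>))) \<and> (\<forall>i<n. 0 < E i \<omega>)"
      then show "(\<omega> \<in> {\<omega>\<in>space M. \<forall>i<n. t i < E i \<omega>}) =
        (\<omega> \<in> {\<omega>\<in>space M. (Y 0 \<omega> = s \<and> (\<forall>i<n. 0 < w (Y i \<omega>) (Y (Suc i) \<omega>))) \<and> (\<forall>i<n. t i < E i \<omega>)})"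
        by simp
    qed
  qed (rule E_sets, rule path_sets)
  then show ?thesis using path_meas[OF t] by simp
qed

end

context mchain
begin

definition Dset :: "nat \<Rightarrow> nat set \<Rightarrow> (nat \<Rightarrow> real) \<Rightarrow> 'w set" where
  "Dset n S t = {\<omega>\<in>space M. \<forall>i<n. t i < E i \<omega> \<and> (i \<in> S \<longrightarrow> E i \<omega> \<le> 1)}"

lemma Dset_sets: "Dset n S t \<in> sets M"
  unfolding Dset_def by measurable

lemma D_meas:
  assumes "finite S" "S \<subseteq> {..<n}" "\<And>i. 0 \<le> t i" "\<And>i. i \<in> S \<Longrightarrow> t i = 0"
  shows "prob (Dset n S t) = exp (- (\<Sum>i\<in>{..<n}-S. t i)) * (1 - exp (-1)) ^ card S"
  using assms
proof (induction S arbitrary: t rule: finite_induct)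
  case empty
  have "Dset n {} t = {\<omega>\<in>space M. \<forall>i<n. t i < E i \<omega>}" unfolding Dset_def by simp
  then show ?case using E_tail[of t n] empty.prems by simp
next
  case (insert k S)
  define t' where "t' = t(k := 1)"
  have kn: "k < n" using insert.prems by auto
  have tk: "t k = 0" using insert.prems by simp
  have t'pos: "\<And>i. 0 \<le> t' i" unfolding t'_def using insert.prems by simp
  have t'S: "\<And>i. i \<in> S \<Longrightarrow> t' i = 0" unfolding t'_def using insert by auto
  have IH1: "prob (Dset n S t) = exp (- (\<Sum>i\<in>{..<n}-S. t i)) * (1 - exp (-1)) ^ card S"
    using insert.IH[of t] insert.prems by auto
  have IH2: "prob (Dset n S t') = exp (- (\<Sum>i\<in>{..<n}-S. t' i)) * (1 - exp (-1)) ^ card S"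
    using insert.IH[of t'] insert.prems t'pos t'S by auto
  have sub: "Dset n S t' \<subseteq> Dset n S t"
  proof
    fix \<omega> assume "\<omega> \<in> Dset n S t'"
    then have "\<omega> \<in> space M" "\<forall>i<n. t' i < E i \<omega> \<and> (i \<in> S \<longrightarrow> E i \<omega> \<le> 1)" unfolding Dset_def by auto
    moreover have "t i \<le> t' i" for i unfolding t'_def using tk by simp
    ultimately have "\<forall>i<n. t i < E i \<omega> \<and> (i \<in> S \<longrightarrow> E i \<omega> \<le> 1)"
      using le_less_trans by blast
    then show "\<omega> \<in> Dset n S t" unfolding Dset_def using \<open>\<omega> \<in> space M\<close> by blast
  qed
  have diff: "Dset n (insert k S) t = Dset n S t - Dset n S t'"
  proof (rule set_eqI)
    fix \<omega>
    show "\<omega> \<in> Dset n (insert k S) t \<longleftrightarrow> \<omega> \<in> Dset n S t - Dset n S t'"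
      unfolding Dset_def t'_def using kn tk by (auto simp: not_less)
  qed
  have "prob (Dset n (insert k S) t) = prob (Dset n S t) - prob (Dset n S t')"
    unfolding diff by (rule finite_measure_Diff) (auto simp: Dset_sets sub)
  also have "\<dots> = exp (- (\<Sum>i\<in>{..<n}-insert k S. t i)) * (1 - exp (-1)) ^ card (insert k S)"
  proof -
    define R where "R = (\<Sum>i\<in>{..<n}-insert k S. t i)"
    have split: "{..<n} - S = insert k ({..<n} - insert k S)" using kn insert.hyps by auto
    have s1: "(\<Sum>i\<in>{..<n}-S. t i) = R"
      unfolding split R_def by (subst sum.insert) (auto simp: tk)
    have "(\<Sum>i\<in>{..<n}-insert k S. t' i) = R"
      unfolding R_def t'_def by (intro sum.cong) auto
    then have s2: "(\<Sum>i\<in>{..<n}-S. t' i) = 1 + R"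
      unfolding split by (subst sum.insert) (auto simp: t'_def)
    have "exp (- R) * (1 - exp (-1)) ^ card S - exp (- (1 + R)) * (1 - exp (-1)) ^ card S
        = exp (- R) * (1 - exp (-1)) ^ Suc (card S)"
    proof -
      have e: "exp (- (1 + R)) = exp (- R) * exp (-1)" by (simp add: mult_exp_exp)
      show ?thesis unfolding e by (simp add: algebra_simps)
    qed
    then show ?thesis using IH1 IH2 s1 s2 insert.hyps R_def by simp
  qed
  finally show ?case .
qed

lemma block_le:
  "prob {\<omega>\<in>space M. \<forall>i\<in>{N..<N+m}. E i \<omega> \<le> 1} \<le> (1 - exp (-1)) ^ m"
proof -
  have "prob {\<omega>\<in>space M. \<forall>i\<in>{N..<N+m}. E i \<omega> \<le> 1} = prob (Dset (N+m) {N..<N+m} (\<lambda>_. 0))"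
  proof (rule measure_eq_AE)
    show "AE \<omega> in M. (\<omega> \<in> {\<omega>\<in>space M. \<forall>i\<in>{N..<N+m}. E i \<omega> \<le> 1}) = (\<omega> \<in> Dset (N+m) {N..<N+m} (\<lambda>_. 0))"
      using path_AE_all
    proof (rule AE_mp, intro AE_I2 impI)
      fix \<omega> assume "\<omega> \<in> space M" "Y 0 \<omega> = s \<and> (\<forall>i. 0 < w (Y i \<omega>) (Y (Suc i) \<omega>)) \<and> (\<forall>i. 0 < E i \<omega>)"
      then show "(\<omega> \<in> {\<omega>\<in>space M. \<forall>i\<in>{N..<N+m}. E i \<omega> \<le> 1}) = (\<omega> \<in> Dset (N+m) {N..<N+m} (\<lambda>_. 0))"
        unfolding Dset_def by auto
    qed
    show "{\<omega>\<in>space M. \<forall>i\<in>{N..<N+m}. E i \<omega> \<le> 1} \<in> sets M" by measurable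
    show "Dset (N+m) {N..<N+m} (\<lambda>_. 0) \<in> sets M" by (rule Dset_sets)
  qed
  also have "\<dots> = (1 - exp (-1)) ^ m"
    by (subst D_meas) auto
  finally show ?thesis by simp
qed

lemma tail_null: "prob {\<omega>\<in>space M. \<forall>i\<ge>N. E i \<omega> \<le> 1} = 0"
proof -
  define c :: real where "c = 1 - exp (-1)"
  define P where "P = prob {\<omega>\<in>space M. \<forall>i\<ge>N. E i \<omega> \<le> 1}"
  have c1: "c < 1" unfolding c_def by simp
  have le: "P \<le> c ^ m" for m
  proof -
    have "P \<le> prob {\<omega>\<in>space M. \<forall>i\<in>{N..<N+m}. E i \<omega> \<le> 1}"
      unfolding P_def
    proof (rule finite_measure_mono)
      show "{\<omega>\<in>space M. \<forall>i\<ge>N. E i \<omega> \<le> 1} \<subseteq> {\<omega>\<in>space M. \<forall>i\<in>{N..<N+m}. E i \<omega> \<le> 1}" by auto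
      show "{\<omega>\<in>space M. \<forall>i\<in>{N..<N+m}. E i \<omega> \<le> 1} \<in> sets M" by measurable
    qed
    also have "\<dots> \<le> c ^ m" unfolding c_def by (rule block_le)
    finally show ?thesis .
  qed
  have P0: "0 \<le> P" unfolding P_def by (rule measure_nonneg)
  show ?thesis
  proof (rule ccontr)
    assume "prob {\<omega>\<in>space M. \<forall>i\<ge>N. E i \<omega> \<le> 1} \<noteq> 0"
    then have p: "0 < P" using P0 unfolding P_def by linarith
    obtain m where "c ^ m < P"
      using real_arch_pow_inv[OF p c1] by (elim exE)
    with le[of m] show False by linarith
  qed
qed

lemma AE_inf_big: "AE \<omega> in M. \<forall>N. \<exists>i\<ge>N. 1 < E i \<omega>"
proof (subst AE_all_countable, rule allI)
  fix N
  have "{\<omega>\<in>space M. \<forall>i\<ge>N. E i \<omega> \<le> 1} \<in> null_sets M"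
  proof (rule null_setsI)
    show S: "{\<omega>\<in>space M. \<forall>i\<ge>N. E i \<omega> \<le> 1} \<in> sets M" by measurable
    show "emeasure M {\<omega>\<in>space M. \<forall>i\<ge>N. E i \<omega> \<le> 1} = 0"
      using tail_null[of N] by (simp add: emeasure_eq_measure)
  qed
  then have "AE \<omega> in M. \<omega> \<notin> {\<omega>\<in>space M. \<forall>i\<ge>N. E i \<omega> \<le> 1}" by (rule AE_not_in)
  then show "AE \<omega> in M. \<exists>i\<ge>N. 1 < E i \<omega>"
  proof (rule AE_mp, intro AE_I2 impI)
    fix \<omega> assume "\<omega> \<in> space M" "\<omega> \<notin> {\<omega>\<in>space M. \<forall>i\<ge>N. E i \<omega> \<le> 1}"
    then show "\<exists>i\<ge>N. 1 < E i \<omega>" by (auto simp: not_le)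
  qed
qed

end

lemma sum_div_diverge:
  fixes e :: "nat \<Rightarrow> real"
  assumes pos: "\<And>i. 0 \<le> e i" and inf: "\<forall>N. \<exists>i\<ge>N. 1 < e i"
  shows "\<exists>m. real q \<le> (\<Sum>i\<in>{N..<N+m}. e i)"
proof (induction q)
  case 0 show ?case by (auto intro!: exI[of _ 0])
next
  case (Suc q)
  then obtain m where m: "real q \<le> (\<Sum>i\<in>{N..<N+m}. e i)" by blast
  obtain j where j: "N + m \<le> j" "1 < e j" using inf by blast
  have "(\<Sum>i\<in>{N..<N+m}. e i) + e j \<le> (\<Sum>i\<in>{N..<Suc j}. e i)"
  proof -
    have sub: "insert j {N..<N+m} \<subseteq> {N..<Suc j}" using j by auto
    have "(\<Sum>i\<in>{N..<N+m}. e i) + e j = (\<Sum>i\<in>insert j {N..<N+m}. e i)"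
      using j by (subst sum.insert) auto
    also have "\<dots> \<le> (\<Sum>i\<in>{N..<Suc j}. e i)"
      by (rule sum_mono2[OF _ sub]) (auto intro: pos)
    finally show ?thesis .
  qed
  then have "real (Suc q) \<le> (\<Sum>i\<in>{N..<Suc j}. e i)" using m j(2) by simp
  moreover have "{N..<Suc j} = {N..<N + (Suc j - N)}" using j by simp
  ultimately have "real (Suc q) \<le> (\<Sum>i\<in>{N..<N + (Suc j - N)}. e i)" by simp
  then show ?case by (rule exI)
qed

context
  fixes V :: "'a set" and w :: "'a \<Rightarrow> 'a \<Rightarrow> real" and \<mu> :: "'a \<Rightarrow> real"
  assumes G: "simple_weighted_graph V w \<mu>"
begin

lemma no_explosion_pointwise:
  fixes Y :: "nat \<Rightarrow> 'w \<Rightarrow> 'a" and E :: "nat \<Rightarrow> 'w \<Rightarrow> real" and \<omega> :: 'w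
    and d :: "'a \<Rightarrow> 'a \<Rightarrow> real" and R :: "real \<Rightarrow> real" and s :: 'a and T :: real
  assumes sV: "s \<in> V"
    and hY0: "Y 0 \<omega> = s" and hY: "\<forall>i. 0 < w (Y i \<omega>) (Y (Suc i) \<omega>)"
    and hE: "\<forall>i. 0 < E i \<omega>" and hinf: "\<forall>N. \<exists>i\<ge>N. 1 < E i \<omega>"
    and hT: "ereal T < lifetime w \<mu> Y E \<omega>"
    and hR: "\<forall>t. 0 \<le> t \<and> T \<le> t \<and> ereal t < lifetime w \<mu> Y E \<omega> \<longrightarrow>
              d (chain_state w \<mu> Y E t \<omega>) s \<le> R t"
    and mono: "mono_on {0..} R"
    and balls: "\<forall>r. finite {y \<in> V. d s y \<le> r}"
    and dsym: "\<forall>x\<in>V. \<forall>y\<in>V. d x y = d y x"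
  shows "lifetime w \<mu> Y E \<omega> = \<infinity>"
proof (rule ccontr)
  assume nI: "lifetime w \<mu> Y E \<omega> \<noteq> \<infinity>"
  define J where "J n = jump_time w \<mu> Y E n \<omega>" for n
  define r where "r i = jump_rate w \<mu> (Y i \<omega>)" for i
  have YV: "Y i \<omega> \<in> V" for i
  proof (cases i)
    case 0 then show ?thesis using hY0 sV by simp
  next
    case (Suc j) then show ?thesis using hY w_pos_V[OF G] by blast
  qed
  have rpos: "0 < r i" for i unfolding r_def using rate_pos[OF G YV] .
  have JSuc: "J (Suc n) = J n + E n \<omega> / r n" for n
    unfolding J_def jump_time_def r_def by simp
  have Jlt: "J n < J (Suc n)" for n
    using JSuc[of n] hE rpos[of n] by simp
  have Jmono: "J m \<le> J n" if "m \<le> n" for m n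
    by (rule lift_Suc_mono_le[of J, OF _ that]) (simp add: Jlt less_imp_le)
  have J0: "J 0 = 0" unfolding J_def jump_time_def by simp
  have Jnn: "0 \<le> J n" for n using Jmono[of 0 n] J0 by simp
  have lt: "lifetime w \<mu> Y E \<omega> = (SUP n. ereal (J n))"
    unfolding lifetime_def J_def ..
  have Jle_lt: "ereal (J n) \<le> lifetime w \<mu> Y E \<omega>" for n
    unfolding lt by (rule SUP_upper) simp
  have "ereal 0 \<le> lifetime w \<mu> Y E \<omega>" using Jle_lt[of 0] J0 by simp
  then obtain L where L: "lifetime w \<mu> Y E \<omega> = ereal L" using nI
    by (cases "lifetime w \<mu> Y E \<omega>") auto
  have JL: "J n \<le> L" for n using Jle_lt[of n] L by simp
  have L0: "0 \<le> L" using JL[of 0] J0 by simp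
  obtain N where N: "ereal T < ereal (J N)"
    using hT unfolding lt by (subst (asm) less_SUP_iff) blast
  have inF: "d s (Y n \<omega>) \<le> R L" if "N \<le> n" for n
  proof -
    have Tn: "T \<le> J n" using N Jmono[OF that] by simp
    have "ereal (J n) < ereal (J (Suc n))" using Jlt by simp
    also have "\<dots> \<le> lifetime w \<mu> Y E \<omega>" by (rule Jle_lt)
    finally have ltn: "ereal (J n) < lifetime w \<mu> Y E \<omega>" .
    have least: "(LEAST m. J n < J (Suc m)) = n"
    proof (rule Least_equality)
      show "J n < J (Suc n)" using Jlt[of n] .
      fix m assume "J n < J (Suc m)"
      then show "n \<le> m" using Jmono[of "Suc m" n] by (cases "n \<le> m") auto
    qed
    have cs: "chain_state w \<mu> Y E (J n) \<omega> = Y n \<omega>"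
      unfolding chain_state_def J_def[symmetric] least by (rule refl)
    have "d (chain_state w \<mu> Y E (J n) \<omega>) s \<le> R (J n)" using hR Jnn[of n] Tn ltn by blast
    then have "d (Y n \<omega>) s \<le> R (J n)" unfolding cs .
    also have "R (J n) \<le> R L" using mono Jnn[of n] L0 JL[of n] by (auto intro: mono_onD)
    finally show ?thesis using dsym[rule_format, OF sV YV[of n]] by simp
  qed
  define F where "F = {y \<in> V. d s y \<le> R L}"
  have Ffin: "finite F" unfolding F_def using balls by blast
  have YF: "Y n \<omega> \<in> F" if "N \<le> n" for n unfolding F_def using inF[OF that] YV by blast
  define K where "K = Max (jump_rate w \<mu> ` F)"
  have rK: "r i \<le> K" if "N \<le> i" for i
    unfolding K_def r_def using Ffin YF[OF that] by (intro Max_ge) auto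
  have Kpos: "0 < K" using rK[of N] rpos[of N] by simp
  have bound: "(\<Sum>i\<in>{N..<N+m}. E i \<omega>) \<le> K * L" for m
  proof -
    have "(\<Sum>i\<in>{N..<N+m}. E i \<omega>) / K = (\<Sum>i\<in>{N..<N+m}. E i \<omega> / K)"
      by (simp add: sum_divide_distrib)
    also have "\<dots> \<le> (\<Sum>i\<in>{N..<N+m}. E i \<omega> / r i)"
    proof (rule sum_mono)
      fix i assume "i \<in> {N..<N+m}"
      then have "r i \<le> K" using rK by auto
      then show "E i \<omega> / K \<le> E i \<omega> / r i"
        using hE rpos[of i] by (intro divide_left_mono) (auto simp: less_imp_le)
    qed
    also have "\<dots> = J (N+m) - J N"
    proof -
      have "J (N+m) = (\<Sum>i\<in>{0..<N+m}. E i \<omega> / r i)"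
        unfolding J_def jump_time_def r_def by (simp add: atLeast0LessThan)
      also have "\<dots> = (\<Sum>i\<in>{0..<N}. E i \<omega> / r i) + (\<Sum>i\<in>{N..<N+m}. E i \<omega> / r i)"
        by (rule sum.atLeastLessThan_concat[symmetric]) auto
      also have "(\<Sum>i\<in>{0..<N}. E i \<omega> / r i) = J N"
        unfolding J_def jump_time_def r_def by (simp add: atLeast0LessThan)
      finally show ?thesis by simp
    qed
    also have "\<dots> \<le> L" using JL[of "N+m"] Jnn[of N] by simp
    finally have "(\<Sum>i\<in>{N..<N+m}. E i \<omega>) / K \<le> L" .
    then show ?thesis using Kpos by (simp add: divide_le_eq mult.commute)
  qed
  obtain q :: nat where q: "K * L < real q" using reals_Archimedean2 by blast
  obtain m where "real q \<le> (\<Sum>i\<in>{N..<N+m}. E i \<omega>)"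
    using sum_div_diverge[of "\<lambda>i. E i \<omega>" q N] hE hinf less_imp_le by blast
  with bound[of m] q show False by simp
qed

end

lemma (in mchain) no_explosion:
  assumes disc: "discrete_metric_on V d" and balls: "\<forall>x\<in>V. \<forall>r. finite {y\<in>V. d x y \<le> r}"
    and urf: "upper_rate_function w \<mu> d s M Y E R"
  shows "AE \<omega> in M. lifetime w \<mu> Y E \<omega> = \<infinity>"
proof -
  have urf': "(\<forall>t\<ge>0. 0 \<le> R t) \<and> mono_on {0..} R \<and>
     (\<exists>T :: 'w \<Rightarrow> real. AE \<omega> in M. ereal (T \<omega>) < lifetime w \<mu> Y E \<omega> \<and>
        (\<forall>t. 0 \<le> t \<and> T \<omega> \<le> t \<and> ereal t < lifetime w \<mu> Y E \<omega> \<longrightarrow>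
              d (chain_state w \<mu> Y E t \<omega>) s \<le> R t))"
    using urf unfolding upper_rate_function_def .
  then have mono: "mono_on {0..} R" by (elim conjE)
  from urf' obtain T :: "'w \<Rightarrow> real" where T: "AE \<omega> in M. ereal (T \<omega>) < lifetime w \<mu> Y E \<omega> \<and>
        (\<forall>t. 0 \<le> t \<and> T \<omega> \<le> t \<and> ereal t < lifetime w \<mu> Y E \<omega> \<longrightarrow>
              d (chain_state w \<mu> Y E t \<omega>) s \<le> R t)"
    by (elim conjE exE)
  have dsym: "\<forall>x\<in>V. \<forall>y\<in>V. d x y = d y x" using disc unfolding discrete_metric_on_def by (elim conjE)
  have ballss: "\<forall>r. finite {y \<in> V. d s y \<le> r}" using balls sV by (rule bspec)
  define P1 where "P1 \<omega> = (ereal (T \<omega>) < lifetime w \<mu> Y E \<omega> \<and>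
        (\<forall>t. 0 \<le> t \<and> T \<omega> \<le> t \<and> ereal t < lifetime w \<mu> Y E \<omega> \<longrightarrow>
              d (chain_state w \<mu> Y E t \<omega>) s \<le> R t))" for \<omega>
  define P2 where "P2 \<omega> = (Y 0 \<omega> = s \<and> (\<forall>i. 0 < w (Y i \<omega>) (Y (Suc i) \<omega>)) \<and> (\<forall>i. 0 < E i \<omega>))" for \<omega>
  define P3 where "P3 \<omega> = (\<forall>N. \<exists>i\<ge>N. 1 < E i \<omega>)" for \<omega>
  have a1: "AE \<omega> in M. P1 \<omega>" unfolding P1_def by (rule T)
  have a2: "AE \<omega> in M. P2 \<omega>" unfolding P2_def by (rule path_AE_all)
  have a3: "AE \<omega> in M. P3 \<omega>" unfolding P3_def by (rule AE_inf_big)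
  have all: "AE \<omega> in M. P1 \<omega> \<and> P2 \<omega> \<and> P3 \<omega>"
    by (rule eventually_conj[OF a1 eventually_conj[OF a2 a3]])
  have pt: "lifetime w \<mu> Y E \<omega> = \<infinity>" if H: "P1 \<omega> \<and> P2 \<omega> \<and> P3 \<omega>" for \<omega>
  proof -
    have HH: "(ereal (T \<omega>) < lifetime w \<mu> Y E \<omega> \<and>
        (\<forall>t. 0 \<le> t \<and> T \<omega> \<le> t \<and> ereal t < lifetime w \<mu> Y E \<omega> \<longrightarrow>
              d (chain_state w \<mu> Y E t \<omega>) s \<le> R t)) \<and>
        (Y 0 \<omega> = s \<and> (\<forall>i. 0 < w (Y i \<omega>) (Y (Suc i) \<omega>)) \<and> (\<forall>i. 0 < E i \<omega>)) \<and>
        (\<forall>N. \<exists>i\<ge>N. 1 < E i \<omega>)" using H unfolding P1_def P2_def P3_def .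
    have h1: "ereal (T \<omega>) < lifetime w \<mu> Y E \<omega>" using HH by (elim conjE)
    have h2: "\<forall>t. 0 \<le> t \<and> T \<omega> \<le> t \<and> ereal t < lifetime w \<mu> Y E \<omega> \<longrightarrow>
              d (chain_state w \<mu> Y E t \<omega>) s \<le> R t" using HH by (elim conjE)
    have h3: "Y 0 \<omega> = s" using HH by (elim conjE)
    have h4: "\<forall>i. 0 < w (Y i \<omega>) (Y (Suc i) \<omega>)" using HH by (elim conjE)
    have h5: "\<forall>i. 0 < E i \<omega>" using HH by (elim conjE)
    have h6: "\<forall>N. \<exists>i\<ge>N. 1 < E i \<omega>" using HH by (elim conjE)
    show "lifetime w \<mu> Y E \<omega> = \<infinity>"
      by (rule no_explosion_pointwise[OF G sV h3 h4 h5 h6 h1 h2 mono ballss dsym])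
  qed
  show ?thesis using all by (rule AE_mp) (intro AE_I2 impI pt)
qed

lemma path_exists:
  assumes G: "simple_weighted_graph V w \<mu>" and a: "a \<in> V" and b: "b \<in> V"
  shows "\<exists>p. p \<noteq> [] \<and> hd p = a \<and> last p = b \<and> 0 < path_prob w a p"
proof -
  have "(a, b) \<in> {(a, b). 0 < w a b}\<^sup>*" using G a b unfolding simple_weighted_graph_def by blast
  then show ?thesis
  proof (induction rule: rtrancl_induct)
    case base
    show ?case by (rule exI[of _ "[a]"]) (simp add: path_prob_def)
  next
    case (step y z)
    then obtain p where p: "p \<noteq> []" "hd p = a" "last p = y" "0 < path_prob w a p" by blast
    have wyz: "0 < w y z" using step.hyps(2) by simp
    have yV: "y \<in> V" using w_pos_V[OF G wyz] by blast
    have "0 < jump_prob w y z" unfolding jump_prob_def using wyz wdeg_pos[OF G yV] by simp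
    then have "0 < path_prob w a (p @ [z])"
      using path_prob_snoc[OF G p(1)] p(3,4) by simp
    moreover have "p @ [z] \<noteq> []" "hd (p @ [z]) = a" "last (p @ [z]) = z" using p by auto
    ultimately show ?case by blast
  qed
qed

lemma nth_cat:
  assumes "length p = Suc k" "length ys = Suc n" "i \<le> k + n"
  shows "(p @ tl ys) ! i = (if i \<le> k then p ! i else ys ! (i - k))"
proof (cases "i \<le> k")
  case True then show ?thesis using assms by (simp add: nth_append)
next
  case False
  then have "(p @ tl ys) ! i = tl ys ! (i - Suc k)" using assms by (simp add: nth_append)
  also have "\<dots> = ys ! Suc (i - Suc k)" using assms False by (intro nth_tl) simp
  also have "Suc (i - Suc k) = i - k" using False by simp
  finally show ?thesis using False by simp
qed

lemma listcat:
  assumes lp: "length p = Suc k" and ly: "length ys = Suc n" and h: "ys ! 0 = p ! k"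
  shows "(\<forall>i\<le>k+n. y i = (p @ tl ys) ! i) \<longleftrightarrow> (\<forall>i\<le>k. y i = p ! i) \<and> (\<forall>i\<le>n. y (k+i) = ys ! i)"
proof
  assume H: "\<forall>i\<le>k+n. y i = (p @ tl ys) ! i"
  show "(\<forall>i\<le>k. y i = p ! i) \<and> (\<forall>i\<le>n. y (k+i) = ys ! i)"
  proof (intro conjI allI impI)
    fix i assume "i \<le> k" then show "y i = p ! i" using H nth_cat[OF lp ly, of i] by simp
  next
    fix i assume i: "i \<le> n"
    have "y (k+i) = (p @ tl ys) ! (k+i)" using H i by simp
    also have "\<dots> = ys ! i" using nth_cat[OF lp ly, of "k+i"] i h by (cases "i = 0") auto
    finally show "y (k+i) = ys ! i" .
  qed
next
  assume H: "(\<forall>i\<le>k. y i = p ! i) \<and> (\<forall>i\<le>n. y (k+i) = ys ! i)"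
  show "\<forall>i\<le>k+n. y i = (p @ tl ys) ! i"
  proof (intro allI impI)
    fix i assume i: "i \<le> k + n"
    show "y i = (p @ tl ys) ! i"
    proof (cases "i \<le> k")
      case True then show ?thesis using H nth_cat[OF lp ly i] by simp
    next
      case False
      then have "y i = y (k + (i - k))" by simp
      also have "\<dots> = ys ! (i - k)" using H i by simp
      finally show ?thesis using nth_cat[OF lp ly i] False by simp
    qed
  qed
qed

lemma sum_split_nat: "(\<Sum>i<k+(n::nat). f i) = (\<Sum>i<k. f i) + (\<Sum>j<n. f (k+j))"
  by (induction n) (simp_all add: add.assoc)

lemma meas_union_paths:
  fixes M :: "'w measure" and P :: "'a list set" and S :: "'a list \<Rightarrow> 'w set" and f :: "nat \<Rightarrow> 'w \<Rightarrow> 'a"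
  assumes fm: "finite_measure M" and fin: "finite P" and sets: "\<And>ys. ys \<in> P \<Longrightarrow> S ys \<in> sets M"
    and val: "\<And>ys \<omega>. ys \<in> P \<Longrightarrow> \<omega> \<in> S ys \<Longrightarrow> \<forall>i\<le>n. f i \<omega> = ys ! i"
    and uniq: "\<And>ys zs. ys \<in> P \<Longrightarrow> zs \<in> P \<Longrightarrow> \<forall>i\<le>n. ys ! i = zs ! i \<Longrightarrow> ys = zs"
  shows "measure M (\<Union>ys\<in>P. S ys) = (\<Sum>ys\<in>P. measure M (S ys))"
proof (rule measure_finite_Union)
  interpret finite_measure M by (rule fm)
  show "finite P" by (rule fin)
  show "S ` P \<subseteq> sets M" using sets by blast
  show "disjoint_family_on S P" unfolding disjoint_family_on_def
  proof (intro ballI impI)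
    fix ys zs assume ys: "ys \<in> P" and zs: "zs \<in> P" and ne: "ys \<noteq> zs"
    show "S ys \<inter> S zs = {}"
    proof (rule equals0I)
      fix \<omega> assume "\<omega> \<in> S ys \<inter> S zs"
      then have w1: "\<omega> \<in> S ys" and w2: "\<omega> \<in> S zs" by auto
      have a: "\<forall>i\<le>n. f i \<omega> = ys ! i" by (rule val[OF ys w1])
      have b: "\<forall>i\<le>n. f i \<omega> = zs ! i" by (rule val[OF zs w2])
      have "\<forall>i\<le>n. ys ! i = zs ! i"
      proof (intro allI impI)
        fix i assume i: "i \<le> n"
        show "ys ! i = zs ! i" using a[rule_format, OF i] b[rule_format, OF i] by simp
      qed
      then show False using uniq[OF ys zs] ne by blast
    qed
  qed
  show "emeasure M (S ys) \<noteq> \<infinity>" for ys unfolding infinity_ennreal_def by (rule emeasure_finite)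
qed

locale two_chains =
  A: mchain V w \<mu> xb M1 Y1 E1 + B: mchain V w \<mu> x M2 Y2 E2
  for V :: "'a set" and w \<mu> xb and M1 :: "'w measure" and Y1 E1 x and M2 :: "'w measure" and Y2 E2 +
  fixes p :: "'a list" and k :: nat
  assumes plen: "length p = Suc k" and phd: "hd p = xb" and plast: "last p = x"
    and ppos: "0 < path_prob w xb p"
begin

definition A1s :: "nat \<Rightarrow> 'a list \<Rightarrow> 'w set" where
  "A1s n ys = {\<omega>\<in>space M1. (\<forall>i\<le>k+n. Y1 i \<omega> = (p @ tl ys) ! i) \<and> (\<forall>i<k+n. 0 < E1 i \<omega>)}"

definition A2s :: "nat \<Rightarrow> 'a list \<Rightarrow> 'w set" where
  "A2s n ys = {\<omega>\<in>space M2. (\<forall>i\<le>n. Y2 i \<omega> = ys ! i) \<and> (\<forall>i<n. 0 < E2 i \<omega>)}"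

lemma A1s_sets: "A1s n ys \<in> sets M1" unfolding A1s_def by measurable
lemma A2s_sets: "A2s n ys \<in> sets M2" unfolding A2s_def by measurable

lemma pk: "p ! k = x"
  using plen plast by (cases p rule: rev_cases) (auto simp: nth_append)

lemma eq_boxes:
  assumes ys: "ys \<in> gpaths w x n"
  shows "measure M1 {\<omega>\<in>A1s n ys. \<forall>i<n. a i < E1 (k+i) \<omega>}
       = path_prob w xb p * measure M2 {\<omega>\<in>A2s n ys. \<forall>i<n. a i < E2 i \<omega>}"
proof -
  have ly: "length ys = Suc n" and hy: "hd ys = x" using ys unfolding gpaths_def by auto
  have yne: "ys \<noteq> []" using ly by auto
  define t1 where "t1 i = (if i < k then 0 else max 0 (a (i - k)))" for i
  define t2 where "t2 i = max 0 (a i)" for i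
  have t1p: "0 \<le> t1 i" for i unfolding t1_def by simp
  have t2p: "0 \<le> t2 i" for i unfolding t2_def by simp
  have s1: "{\<omega>\<in>A1s n ys. \<forall>i<n. a i < E1 (k+i) \<omega>}
      = {\<omega>\<in>space M1. (\<forall>i\<le>k+n. Y1 i \<omega> = (p @ tl ys) ! i) \<and> (\<forall>i<k+n. t1 i < E1 i \<omega>)}"
  proof -
    have "((\<forall>i<k+n. 0 < E1 i \<omega>) \<and> (\<forall>i<n. a i < E1 (k+i) \<omega>)) \<longleftrightarrow> (\<forall>i<k+n. t1 i < E1 i \<omega>)" for \<omega>
    proof
      assume H: "(\<forall>i<k+n. 0 < E1 i \<omega>) \<and> (\<forall>i<n. a i < E1 (k+i) \<omega>)"
      show "\<forall>i<k+n. t1 i < E1 i \<omega>"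
      proof (intro allI impI)
        fix i assume i: "i < k + n"
        show "t1 i < E1 i \<omega>"
        proof (cases "i < k")
          case True then show ?thesis using H i unfolding t1_def by simp
        next
          case False
          have "i - k < n" using False i by simp
          then have "a (i - k) < E1 (k + (i - k)) \<omega>" using H by blast
          moreover have "k + (i - k) = i" using False by simp
          ultimately show ?thesis using H i False unfolding t1_def by simp
        qed
      qed
    next
      assume H: "\<forall>i<k+n. t1 i < E1 i \<omega>"
      show "(\<forall>i<k+n. 0 < E1 i \<omega>) \<and> (\<forall>i<n. a i < E1 (k+i) \<omega>)"
      proof (intro conjI allI impI)
        fix i assume i: "i < k + n"
        show "0 < E1 i \<omega>" using H i t1p[of i] by force
      next
        fix i assume i: "i < n"
        have "t1 (k+i) < E1 (k+i) \<omega>" using H i by simp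
        then show "a i < E1 (k+i) \<omega>" unfolding t1_def by simp
      qed
    qed
    then show ?thesis unfolding A1s_def by blast
  qed
  have s2: "{\<omega>\<in>A2s n ys. \<forall>i<n. a i < E2 i \<omega>}
      = {\<omega>\<in>space M2. (\<forall>i\<le>n. Y2 i \<omega> = ys ! i) \<and> (\<forall>i<n. t2 i < E2 i \<omega>)}"
    unfolding A2s_def t2_def by auto
  have l1: "length (p @ tl ys) = Suc (k + n)" using plen ly by simp
  have c1: "measure M1 {\<omega>\<in>A1s n ys. \<forall>i<n. a i < E1 (k+i) \<omega>}
      = path_prob w xb (p @ tl ys) * exp (- (\<Sum>i<k+n. t1 i))"
    unfolding s1 by (rule A.cyl[OF l1 t1p])
  have c2: "measure M2 {\<omega>\<in>A2s n ys. \<forall>i<n. a i < E2 i \<omega>}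
      = path_prob w x ys * exp (- (\<Sum>i<n. t2 i))"
    unfolding s2 by (rule B.cyl[OF ly t2p])
  have sum: "(\<Sum>i<k+n. t1 i) = (\<Sum>i<n. t2 i)"
    unfolding sum_split_nat by (simp add: t1_def t2_def)
  have "p \<noteq> []" using plen by auto
  then have pp: "path_prob w xb (p @ tl ys) = path_prob w xb p * path_prob w x ys"
    using path_prob_append[OF A.G, of p xb "tl ys"] plast hy yne by (cases ys) auto
  show ?thesis using c1 c2 sum pp by simp
qed


definition Qs :: "nat \<Rightarrow> real \<Rightarrow> 'a list \<Rightarrow> 'w set" where
  "Qs n L ys = {\<omega>\<in>A1s n ys. (\<Sum>i<n. E1 (k+i) \<omega> / jump_rate w \<mu> (ys ! i)) \<le> L}"

definition Ps :: "nat \<Rightarrow> real \<Rightarrow> 'a list \<Rightarrow> 'w set" where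
  "Ps n L ys = {\<omega>\<in>A2s n ys. (\<Sum>i<n. E2 i \<omega> / jump_rate w \<mu> (ys ! i)) \<le> L}"

lemma Qs_sets: "Qs n L ys \<in> sets M1"
proof -
  have "Qs n L ys = {\<omega>\<in>space M1. (\<Sum>i<n. E1 (k+i) \<omega> / jump_rate w \<mu> (ys ! i)) \<le> L} \<inter> A1s n ys"
    unfolding Qs_def using sets.sets_into_space[OF A1s_sets] by blast
  also have "\<dots> \<in> sets M1" by (intro sets.Int A1s_sets) measurable
  finally show ?thesis .
qed

lemma Ps_sets: "Ps n L ys \<in> sets M2"
proof -
  have "Ps n L ys = {\<omega>\<in>space M2. (\<Sum>i<n. E2 i \<omega> / jump_rate w \<mu> (ys ! i)) \<le> L} \<inter> A2s n ys"
    unfolding Ps_def using sets.sets_into_space[OF A2s_sets] by blast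
  also have "\<dots> \<in> sets M2" by (intro sets.Int A2s_sets) measurable
  finally show ?thesis .
qed

lemma QP:
  assumes ys: "ys \<in> gpaths w x n"
  shows "measure M1 (Qs n L ys) = path_prob w xb p * measure M2 (Ps n L ys)"
proof -
  define g where "g e = (\<Sum>i<n. e i / jump_rate w \<mu> (ys ! i))" for e :: "nat \<Rightarrow> real"
  have gm: "g \<in> borel_measurable (PiM {..<n} (\<lambda>_. borel))" unfolding g_def by measurable
  have fm1: "finite_measure M1" by (rule finite_measureI) (simp add: A.emeasure_space_1)
  have fm2: "finite_measure M2" by (rule finite_measureI) (simp add: B.emeasure_space_1)
  have U: "measure M1 {\<omega>\<in>A1s n ys. g (\<lambda>i\<in>{..<n}. E1 (k+i) \<omega>) \<le> L}
      = path_prob w xb p * measure M2 {\<omega>\<in>A2s n ys. g (\<lambda>i\<in>{..<n}. E2 i \<omega>) \<le> L}"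
  proof -
    have Fm1: "\<And>i. E1 (k+i) \<in> borel_measurable M1" by measurable
    have Fm2: "\<And>i. E2 i \<in> borel_measurable M2" by measurable
    have c0: "0 \<le> path_prob w xb p" by (rule path_prob_nonneg[OF A.G])
    have eqb: "\<And>a. measure M1 {\<omega>\<in>A1s n ys. \<forall>i<n. a i < E1 (k+i) \<omega>}
       = path_prob w xb p * measure M2 {\<omega>\<in>A2s n ys. \<forall>i<n. a i < E2 i \<omega>}"
      by (rule eq_boxes[OF ys])
    show ?thesis by (rule uniq_box[OF fm1 fm2 A1s_sets A2s_sets Fm1 Fm2 c0 eqb gm])
  qed
  have g1: "g (\<lambda>i\<in>{..<n}. E1 (k+i) \<omega>) = (\<Sum>i<n. E1 (k+i) \<omega> / jump_rate w \<mu> (ys ! i))" for \<omega>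
    unfolding g_def by (intro sum.cong) auto
  have g2: "g (\<lambda>i\<in>{..<n}. E2 i \<omega>) = (\<Sum>i<n. E2 i \<omega> / jump_rate w \<mu> (ys ! i))" for \<omega>
    unfolding g_def by (intro sum.cong) auto
  show ?thesis using U unfolding g1 g2 Qs_def Ps_def .
qed


lemma ys0: "ys \<in> gpaths w x n \<Longrightarrow> ys ! 0 = p ! k"
proof -
  assume "ys \<in> gpaths w x n"
  then have "ys \<noteq> []" "hd ys = x" unfolding gpaths_def by auto
  then show "ys ! 0 = p ! k" using pk by (simp add: hd_conv_nth[symmetric])
qed

lemma Qs_val:
  assumes ys: "ys \<in> gpaths w x n" and \<omega>: "\<omega> \<in> Qs n L ys"
  shows "(\<forall>i\<le>k. Y1 i \<omega> = p ! i) \<and> (\<forall>i\<le>n. Y1 (k+i) \<omega> = ys ! i)"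
proof -
  have ly: "length ys = Suc n" using ys unfolding gpaths_def by simp
  have "\<forall>i\<le>k+n. Y1 i \<omega> = (p @ tl ys) ! i" using \<omega> unfolding Qs_def A1s_def by blast
  then show ?thesis using listcat[OF plen ly ys0[OF ys], of "\<lambda>i. Y1 i \<omega>"] by simp
qed

definition Qn :: "nat \<Rightarrow> real \<Rightarrow> 'w set" where
  "Qn n L = {\<omega>\<in>space M1. (\<forall>i\<le>k. Y1 i \<omega> = p ! i) \<and> (\<forall>i<n. 0 < w (Y1 (k+i) \<omega>) (Y1 (k + Suc i) \<omega>))
     \<and> (\<forall>i<k+n. 0 < E1 i \<omega>) \<and> (\<Sum>i<n. E1 (k+i) \<omega> / jump_rate w \<mu> (Y1 (k+i) \<omega>)) \<le> L}"

definition Rn :: "nat \<Rightarrow> real \<Rightarrow> 'w set" where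
  "Rn n L = {\<omega>\<in>space M2. (Y2 0 \<omega> = x \<and> (\<forall>i<n. 0 < w (Y2 i \<omega>) (Y2 (Suc i) \<omega>)))
     \<and> (\<forall>i<n. 0 < E2 i \<omega>) \<and> (\<Sum>i<n. E2 i \<omega> / jump_rate w \<mu> (Y2 i \<omega>)) \<le> L}"

lemma Qn_eq: "Qn n L = (\<Union>ys\<in>gpaths w x n. Qs n L ys)"
proof (rule set_eqI, rule iffI)
  fix \<omega> assume H: "\<omega> \<in> Qn n L"
  then have sp: "\<omega> \<in> space M1" and h1: "\<forall>i\<le>k. Y1 i \<omega> = p ! i"
    and h2: "\<forall>i<n. 0 < w (Y1 (k+i) \<omega>) (Y1 (k + Suc i) \<omega>)" and h3: "\<forall>i<k+n. 0 < E1 i \<omega>"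
    and h4: "(\<Sum>i<n. E1 (k+i) \<omega> / jump_rate w \<mu> (Y1 (k+i) \<omega>)) \<le> L"
    unfolding Qn_def by auto
  have "Y1 k \<omega> = x" using h1 pk by simp
  then have "\<exists>ys\<in>gpaths w x n. \<forall>i\<le>n. Y1 (k+i) \<omega> = ys ! i"
    using gpaths_char[OF A.G, of "\<lambda>i. Y1 (k+i) \<omega>" x n] h2 by simp
  then obtain ys where ys: "ys \<in> gpaths w x n" and yv: "\<forall>i\<le>n. Y1 (k+i) \<omega> = ys ! i" by blast
  have ly: "length ys = Suc n" using ys unfolding gpaths_def by simp
  have cat: "\<forall>i\<le>k+n. Y1 i \<omega> = (p @ tl ys) ! i"
    using listcat[OF plen ly ys0[OF ys], of "\<lambda>i. Y1 i \<omega>"] h1 yv by simp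
  have "(\<Sum>i<n. E1 (k+i) \<omega> / jump_rate w \<mu> (Y1 (k+i) \<omega>)) = (\<Sum>i<n. E1 (k+i) \<omega> / jump_rate w \<mu> (ys ! i))"
    using yv by (intro sum.cong) auto
  then have "\<omega> \<in> Qs n L ys" unfolding Qs_def A1s_def using sp cat h3 h4 by simp
  then show "\<omega> \<in> (\<Union>ys\<in>gpaths w x n. Qs n L ys)" using ys by blast
next
  fix \<omega> assume "\<omega> \<in> (\<Union>ys\<in>gpaths w x n. Qs n L ys)"
  then obtain ys where ys: "ys \<in> gpaths w x n" and q: "\<omega> \<in> Qs n L ys" by blast
  have v: "(\<forall>i\<le>k. Y1 i \<omega> = p ! i) \<and> (\<forall>i\<le>n. Y1 (k+i) \<omega> = ys ! i)" by (rule Qs_val[OF ys q])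
  then have "Y1 (k+0) \<omega> = x \<and> (\<forall>i<n. 0 < w (Y1 (k+i) \<omega>) (Y1 (k + Suc i) \<omega>))"
    using gpaths_char[OF A.G, of "\<lambda>i. Y1 (k+i) \<omega>" x n] ys by blast
  moreover have sp: "\<omega> \<in> space M1" and h3: "\<forall>i<k+n. 0 < E1 i \<omega>"
    and h4: "(\<Sum>i<n. E1 (k+i) \<omega> / jump_rate w \<mu> (ys ! i)) \<le> L"
    using q unfolding Qs_def A1s_def by auto
  moreover have "(\<Sum>i<n. E1 (k+i) \<omega> / jump_rate w \<mu> (Y1 (k+i) \<omega>)) = (\<Sum>i<n. E1 (k+i) \<omega> / jump_rate w \<mu> (ys ! i))"
    using v by (intro sum.cong) auto
  ultimately show "\<omega> \<in> Qn n L" unfolding Qn_def using v by simp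
qed

lemma Rn_eq: "Rn n L = (\<Union>ys\<in>gpaths w x n. Ps n L ys)"
proof (rule set_eqI, rule iffI)
  fix \<omega> assume H: "\<omega> \<in> Rn n L"
  then have sp: "\<omega> \<in> space M2" and h2: "Y2 0 \<omega> = x \<and> (\<forall>i<n. 0 < w (Y2 i \<omega>) (Y2 (Suc i) \<omega>))"
    and h3: "\<forall>i<n. 0 < E2 i \<omega>"
    and h4: "(\<Sum>i<n. E2 i \<omega> / jump_rate w \<mu> (Y2 i \<omega>)) \<le> L"
    unfolding Rn_def by auto
  have "\<exists>ys\<in>gpaths w x n. \<forall>i\<le>n. Y2 i \<omega> = ys ! i"
    using gpaths_char[OF A.G, of "\<lambda>i. Y2 i \<omega>" x n] h2 by simp
  then obtain ys where ys: "ys \<in> gpaths w x n" and yv: "\<forall>i\<le>n. Y2 i \<omega> = ys ! i" by blast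
  have "(\<Sum>i<n. E2 i \<omega> / jump_rate w \<mu> (Y2 i \<omega>)) = (\<Sum>i<n. E2 i \<omega> / jump_rate w \<mu> (ys ! i))"
    using yv by (intro sum.cong) auto
  then have "\<omega> \<in> Ps n L ys" unfolding Ps_def A2s_def using sp yv h3 h4 by simp
  then show "\<omega> \<in> (\<Union>ys\<in>gpaths w x n. Ps n L ys)" using ys by blast
next
  fix \<omega> assume "\<omega> \<in> (\<Union>ys\<in>gpaths w x n. Ps n L ys)"
  then obtain ys where ys: "ys \<in> gpaths w x n" and q: "\<omega> \<in> Ps n L ys" by blast
  have v: "\<forall>i\<le>n. Y2 i \<omega> = ys ! i" using q unfolding Ps_def A2s_def by blast
  then have "Y2 0 \<omega> = x \<and> (\<forall>i<n. 0 < w (Y2 i \<omega>) (Y2 (Suc i) \<omega>))"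
    using gpaths_char[OF A.G, of "\<lambda>i. Y2 i \<omega>" x n] ys by blast
  moreover have sp: "\<omega> \<in> space M2" and h3: "\<forall>i<n. 0 < E2 i \<omega>"
    and h4: "(\<Sum>i<n. E2 i \<omega> / jump_rate w \<mu> (ys ! i)) \<le> L"
    using q unfolding Ps_def A2s_def by auto
  moreover have "(\<Sum>i<n. E2 i \<omega> / jump_rate w \<mu> (Y2 i \<omega>)) = (\<Sum>i<n. E2 i \<omega> / jump_rate w \<mu> (ys ! i))"
    using v by (intro sum.cong) auto
  ultimately show "\<omega> \<in> Rn n L" unfolding Rn_def by simp
qed

lemma Qn_sets: "Qn n L \<in> sets M1"
  unfolding Qn_eq by (intro sets.finite_UN gpaths_finite[OF A.G] Qs_sets)

lemma Rn_sets: "Rn n L \<in> sets M2"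
  unfolding Rn_eq by (intro sets.finite_UN gpaths_finite[OF A.G] Ps_sets)

lemma QR: "measure M1 (Qn n L) = path_prob w xb p * measure M2 (Rn n L)"
proof -
  have fm1: "finite_measure M1" by (rule finite_measureI) (simp add: A.emeasure_space_1)
  have fm2: "finite_measure M2" by (rule finite_measureI) (simp add: B.emeasure_space_1)
  have "measure M1 (Qn n L) = (\<Sum>ys\<in>gpaths w x n. measure M1 (Qs n L ys))"
    unfolding Qn_eq
  proof (rule meas_union_paths[OF fm1 gpaths_finite[OF A.G] Qs_sets, where f = "\<lambda>i \<omega>. Y1 (k+i) \<omega>"])
    show "\<forall>i\<le>n. Y1 (k+i) \<omega> = ys ! i" if "ys \<in> gpaths w x n" "\<omega> \<in> Qs n L ys" for ys \<omega>
      using Qs_val[OF that] by blast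
    show "ys = zs" if "ys \<in> gpaths w x n" "zs \<in> gpaths w x n" "\<forall>i\<le>n. ys ! i = zs ! i" for ys zs
      using gpaths_unique[OF A.G that] .
  qed
  also have "\<dots> = (\<Sum>ys\<in>gpaths w x n. path_prob w xb p * measure M2 (Ps n L ys))"
    by (intro sum.cong refl QP)
  also have "\<dots> = path_prob w xb p * (\<Sum>ys\<in>gpaths w x n. measure M2 (Ps n L ys))"
    by (simp add: sum_distrib_left)
  also have "(\<Sum>ys\<in>gpaths w x n. measure M2 (Ps n L ys)) = measure M2 (Rn n L)"
    unfolding Rn_eq
  proof (rule meas_union_paths[OF fm2 gpaths_finite[OF A.G] Ps_sets, where f = Y2, symmetric])
    show "\<forall>i\<le>n. Y2 i \<omega> = ys ! i" if "ys \<in> gpaths w x n" "\<omega> \<in> Ps n L ys" for ys \<omega>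
      using that unfolding Ps_def A2s_def by blast
    show "ys = zs" if "ys \<in> gpaths w x n" "zs \<in> gpaths w x n" "\<forall>i\<le>n. ys ! i = zs ! i" for ys zs
      using gpaths_unique[OF A.G that] .
  qed
  finally show ?thesis .
qed


lemma Qn_dec: "Qn (Suc n) L \<subseteq> Qn n L"
proof
  fix \<omega> assume H: "\<omega> \<in> Qn (Suc n) L"
  then have sp: "\<omega> \<in> space M1" and h1: "\<forall>i\<le>k. Y1 i \<omega> = p ! i"
    and h2: "\<forall>i<Suc n. 0 < w (Y1 (k+i) \<omega>) (Y1 (k + Suc i) \<omega>)" and h3: "\<forall>i<k+Suc n. 0 < E1 i \<omega>"
    and h4: "(\<Sum>i<Suc n. E1 (k+i) \<omega> / jump_rate w \<mu> (Y1 (k+i) \<omega>)) \<le> L"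
    unfolding Qn_def by auto
  have YV: "Y1 (k+n) \<omega> \<in> V"
  proof (cases n)
    case 0 then show ?thesis using h1 pk B.sV by simp
  next
    case (Suc m)
    then have "0 < w (Y1 (k+m) \<omega>) (Y1 (k + Suc m) \<omega>)" using h2 by simp
    then show ?thesis using w_pos_V[OF A.G] Suc by simp
  qed
  have "0 < E1 (k+n) \<omega>" using h3 by simp
  then have "0 \<le> E1 (k+n) \<omega> / jump_rate w \<mu> (Y1 (k+n) \<omega>)"
    using rate_pos[OF A.G YV] by simp
  then have "(\<Sum>i<n. E1 (k+i) \<omega> / jump_rate w \<mu> (Y1 (k+i) \<omega>)) \<le> L" using h4 by simp
  then show "\<omega> \<in> Qn n L" unfolding Qn_def using sp h1 h2 h3 by simp
qed

lemma Qn_inter_null: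
  assumes AEA: "AE \<omega> in M1. lifetime w \<mu> Y1 E1 \<omega> = \<infinity>"
  shows "measure M1 (\<Inter>n. Qn n L) = 0"
proof -
  have S: "(\<Inter>n. Qn n L) \<in> sets M1" by (rule sets.countable_INT) (auto intro: Qn_sets)
  have "AE \<omega> in M1. \<omega> \<notin> (\<Inter>n. Qn n L)"
    using eventually_conj[OF AEA A.path_AE_all]
  proof (rule AE_mp, intro AE_I2 impI)
    fix \<omega> assume sp: "\<omega> \<in> space M1" and H: "lifetime w \<mu> Y1 E1 \<omega> = \<infinity> \<and>
       (Y1 0 \<omega> = xb \<and> (\<forall>i. 0 < w (Y1 i \<omega>) (Y1 (Suc i) \<omega>)) \<and> (\<forall>i. 0 < E1 i \<omega>))"
    show "\<omega> \<notin> (\<Inter>n. Qn n L)"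
    proof
      assume Q: "\<omega> \<in> (\<Inter>n. Qn n L)"
      define J where "J m = jump_time w \<mu> Y1 E1 m \<omega>" for m
      have YV: "Y1 i \<omega> \<in> V" for i using A.Y_in_V H by blast
      have JSuc: "J (Suc m) = J m + E1 m \<omega> / jump_rate w \<mu> (Y1 m \<omega>)" for m
        unfolding J_def jump_time_def by simp
      have Jinc: "J m \<le> J (Suc m)" for m
        using JSuc[of m] H rate_pos[OF A.G YV[of m]] by (simp add: less_imp_le)
      have Jmono: "J m \<le> J n" if "m \<le> n" for m n
        by (rule lift_Suc_mono_le[of J, OF _ that]) (rule Jinc)
      have Jb: "J (k+n) \<le> J k + L" for n
      proof -
        have "\<omega> \<in> Qn n L" using Q by blast
        then have "(\<Sum>i<n. E1 (k+i) \<omega> / jump_rate w \<mu> (Y1 (k+i) \<omega>)) \<le> L" unfolding Qn_def by blast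
        moreover have "J (k+n) = J k + (\<Sum>i<n. E1 (k+i) \<omega> / jump_rate w \<mu> (Y1 (k+i) \<omega>))"
          unfolding J_def jump_time_def by (rule sum_split_nat)
        ultimately show ?thesis by simp
      qed
      have "lifetime w \<mu> Y1 E1 \<omega> \<le> ereal (J k + L)"
        unfolding lifetime_def J_def[symmetric]
      proof (rule SUP_least)
        fix m
        have "J m \<le> J (k+m)" by (rule Jmono) simp
        then show "ereal (J m) \<le> ereal (J k + L)" using Jb[of m] by simp
      qed
      then show False using H by simp
    qed
  qed
  then have "(\<Inter>n. Qn n L) \<in> null_sets M1" using AE_iff_null_sets[OF S] by blast
  then show ?thesis by (simp add: A.emeasure_eq_measure null_sets_def)
qed

lemma Rn_inter_null:
  assumes AEA: "AE \<omega> in M1. lifetime w \<mu> Y1 E1 \<omega> = \<infinity>"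
  shows "(\<Inter>n. Rn n L) \<in> null_sets M2"
proof -
  have S: "(\<Inter>n. Rn n L) \<in> sets M2" by (rule sets.countable_INT) (auto intro: Rn_sets)
  have lim: "(\<lambda>n. measure M1 (Qn n L)) \<longlonglongrightarrow> 0"
  proof -
    have "(\<lambda>n. measure M1 (Qn n L)) \<longlonglongrightarrow> measure M1 (\<Inter>n. Qn n L)"
    proof (rule A.finite_Lim_measure_decseq)
      show "range (\<lambda>n. Qn n L) \<subseteq> sets M1" using Qn_sets by blast
      show "decseq (\<lambda>n. Qn n L)" by (rule decseq_SucI) (rule Qn_dec)
    qed
    then show ?thesis using Qn_inter_null[OF AEA] by simp
  qed
  have lim2: "(\<lambda>n. measure M1 (Qn n L) / path_prob w xb p) \<longlonglongrightarrow> 0"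
    using tendsto_divide[OF lim tendsto_const, of "path_prob w xb p"] ppos by simp
  have le: "measure M2 (\<Inter>n. Rn n L) \<le> measure M1 (Qn n L) / path_prob w xb p" for n
  proof -
    have "measure M2 (\<Inter>n. Rn n L) \<le> measure M2 (Rn n L)"
      by (rule B.finite_measure_mono) (auto intro: Rn_sets)
    also have "\<dots> = measure M1 (Qn n L) / path_prob w xb p" using QR[of n L] ppos by simp
    finally show ?thesis .
  qed
  have "measure M2 (\<Inter>n. Rn n L) \<le> 0"
    by (rule LIMSEQ_le_const[OF lim2]) (use le in blast)
  then have "measure M2 (\<Inter>n. Rn n L) = 0" using measure_nonneg[of M2] by (metis antisym)
  then show ?thesis using S by (simp add: null_sets_def B.emeasure_eq_measure)
qed

lemma B_conservative:
  assumes AEA: "AE \<omega> in M1. lifetime w \<mu> Y1 E1 \<omega> = \<infinity>"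
  shows "AE \<omega> in M2. lifetime w \<mu> Y2 E2 \<omega> = \<infinity>"
proof -
  have N: "AE \<omega> in M2. \<forall>L::nat. \<omega> \<notin> (\<Inter>n. Rn n (real L))"
  proof (subst AE_all_countable, rule allI)
    fix L :: nat
    show "AE \<omega> in M2. \<omega> \<notin> (\<Inter>n. Rn n (real L))"
      by (rule AE_not_in[OF Rn_inter_null[OF AEA]])
  qed
  show ?thesis using eventually_conj[OF N B.path_AE_all]
  proof (rule AE_mp, intro AE_I2 impI)
    fix \<omega> assume sp: "\<omega> \<in> space M2" and H: "(\<forall>L::nat. \<omega> \<notin> (\<Inter>n. Rn n (real L))) \<and>
       (Y2 0 \<omega> = x \<and> (\<forall>i. 0 < w (Y2 i \<omega>) (Y2 (Suc i) \<omega>)) \<and> (\<forall>i. 0 < E2 i \<omega>))"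
    show "lifetime w \<mu> Y2 E2 \<omega> = \<infinity>"
    proof (rule ccontr)
      assume nI: "lifetime w \<mu> Y2 E2 \<omega> \<noteq> \<infinity>"
      define J where "J m = jump_time w \<mu> Y2 E2 m \<omega>" for m
      have Jle: "ereal (J m) \<le> lifetime w \<mu> Y2 E2 \<omega>" for m
        unfolding lifetime_def J_def by (rule SUP_upper) simp
      have "ereal 0 \<le> lifetime w \<mu> Y2 E2 \<omega>" using Jle[of 0] by (simp add: J_def jump_time_def)
      then obtain r where r: "lifetime w \<mu> Y2 E2 \<omega> = ereal r" using nI
        by (cases "lifetime w \<mu> Y2 E2 \<omega>") auto
      obtain L :: nat where L: "r \<le> real L" using real_arch_simple by blast
      have "\<omega> \<in> Rn n (real L)" for n
      proof -
        have "J n \<le> r" using Jle[of n] r by simp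
        then have "(\<Sum>i<n. E2 i \<omega> / jump_rate w \<mu> (Y2 i \<omega>)) \<le> real L"
          using L unfolding J_def jump_time_def by simp
        then show ?thesis unfolding Rn_def using sp H by simp
      qed
      then show False using H by blast
    qed
  qed
qed

end

theorem lemma2p4:
  fixes V :: "'a set" and w :: "'a \<Rightarrow> 'a \<Rightarrow> real" and \<mu> :: "'a \<Rightarrow> real"
    and d :: "'a \<Rightarrow> 'a \<Rightarrow> real" and xbar :: 'a
    and M :: "'a \<Rightarrow> 'w measure" and Y :: "'a \<Rightarrow> nat \<Rightarrow> 'w \<Rightarrow> 'a"
    and E :: "'a \<Rightarrow> nat \<Rightarrow> 'w \<Rightarrow> real" and R :: "real \<Rightarrow> real"
  assumes "simple_weighted_graph V w \<mu>"
    and "discrete_metric_on V d"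
    and "xbar \<in> V"
    and "\<forall>x\<in>V. \<forall>r. finite {y \<in> V. d x y \<le> r}"
    and "\<forall>x\<in>V. minimal_chain V w \<mu> x (M x) (Y x) (E x)"
    and "upper_rate_function w \<mu> d xbar (M xbar) (Y xbar) (E xbar) R"
  shows "conservative_chain V w \<mu> M Y E"
  unfolding conservative_chain_def
proof (intro ballI)
  fix x assume xV: "x \<in> V"
  note G = assms(1) and disc = assms(2) and xb = assms(3) and balls = assms(4)
    and mcs = assms(5) and urf = assms(6)
  interpret A: mchain V w \<mu> xbar "M xbar" "Y xbar" "E xbar"
    by unfold_locales (use G xb mcs in auto)
  have AEA: "AE \<omega> in M xbar. lifetime w \<mu> (Y xbar) (E xbar) \<omega> = \<infinity>"
    by (rule A.no_explosion[OF disc balls urf])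
  obtain p where p: "p \<noteq> []" "hd p = xbar" "last p = x" "0 < path_prob w xbar p"
    using path_exists[OF G xb xV] by blast
  interpret T: two_chains V w \<mu> xbar "M xbar" "Y xbar" "E xbar" x "M x" "Y x" "E x" p "length p - 1"
  proof unfold_locales
    show "simple_weighted_graph V w \<mu>" by (rule G)
    show "x \<in> V" by (rule xV)
    show "minimal_chain V w \<mu> x (M x) (Y x) (E x)" using mcs xV by blast
    show "length p = Suc (length p - 1)" using p by (cases p) auto
    show "hd p = xbar" "last p = x" "0 < path_prob w xbar p" using p by auto
  qed
  show "AE \<omega> in M x. lifetime w \<mu> (Y x) (E x) \<omega> = \<infinity>"
    by (rule T.B_conservative[OF AEA])
qed

end
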